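(* For every $a\in\frac12\mathbb N$, the two-dimensional representation $\mathcal D_{\frac12}$ of $\mathfrak{sl}(2,\mathbb C)$ occurs neither in $\mathcal S^3(\mathcal D_a)$ nor in $\Lambda^3(\mathcal D_a)$; hence every occurrence of $\mathcal D_{\frac12}$ in $\mathcal D_a^{\otimes 3}$ lies in the mixed-symmetry part $M(\mathcal D_a)$. Consequently, for $a,b\in\frac12\mathbb N$, any $\mathfrak{so}(1,3)$-equivariant map $\mathcal S^3(\mathcal D_{a,b})\to\mathcal D_{\frac12,\frac12}$ arises from $M(\mathcal D_{a,0})\otimes M(\mathcal D_{0,b})$ (it is of "mixed type"). *)

theory Defs
  imports Complex_Main
begin

text \<open>Concrete model of the irreducible sl(2,C)-module D_a, a = k/2 (k :: nat),
  of dimension k+1 with basis e_0,...,e_k (e_0 highest weight). Standard basis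
  E,F,H of sl(2,C) acts by
    H e_j = (k - 2j) e_j,  E e_j = j(k-j+1) e_(j-1),  F e_j = e_(j+1) (F e_k = 0).\<close>

definition Dsp :: "nat \<Rightarrow> (nat \<Rightarrow> complex) set" where
  "Dsp k = {v. \<forall>i. k < i \<longrightarrow> v i = 0}"

definition rH :: "nat \<Rightarrow> (nat \<Rightarrow> complex) \<Rightarrow> nat \<Rightarrow> complex" where
  "rH k v = (\<lambda>i. complex_of_int (int k - 2 * int i) * v i)"

definition rE :: "nat \<Rightarrow> (nat \<Rightarrow> complex) \<Rightarrow> nat \<Rightarrow> complex" where
  "rE k v = (\<lambda>i. of_nat (Suc i) * of_nat (k - i) * v (Suc i))"

definition rF :: "nat \<Rightarrow> (nat \<Rightarrow> complex) \<Rightarrow> nat \<Rightarrow> complex" where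
  "rF k v = (\<lambda>i. if i = 0 \<or> k < i then 0 else v (i - 1))"

definition lin_on :: "('a \<Rightarrow> complex) set \<Rightarrow> (('a \<Rightarrow> complex) \<Rightarrow> 'b \<Rightarrow> complex) \<Rightarrow> bool" where
  "lin_on S \<phi> \<longleftrightarrow>
     (\<forall>v\<in>S. \<forall>w\<in>S. \<phi> (\<lambda>x. v x + w x) = (\<lambda>y. \<phi> v y + \<phi> w y)) \<and>
     (\<forall>c. \<forall>v\<in>S. \<phi> (\<lambda>x. c * v x) = (\<lambda>y. c * \<phi> v y))"

definition intertwines :: "'x set \<Rightarrow> ('x \<Rightarrow> 'y) \<Rightarrow> ('x \<Rightarrow> 'x) \<Rightarrow> ('y \<Rightarrow> 'y) \<Rightarrow> bool" where
  "intertwines S \<phi> X Y \<longleftrightarrow> (\<forall>v\<in>S. \<phi> (X v) = Y (\<phi> v))"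

definition tens3 :: "('a \<Rightarrow> bool) \<Rightarrow> ('a \<times> 'a \<times> 'a \<Rightarrow> complex) set" where
  "tens3 P = {t. \<forall>x1 x2 x3. t (x1, x2, x3) \<noteq> 0 \<longrightarrow> P x1 \<and> P x2 \<and> P x3}"

definition cube3 :: "(('a \<Rightarrow> complex) \<Rightarrow> 'a \<Rightarrow> complex) \<Rightarrow> ('a \<times> 'a \<times> 'a \<Rightarrow> complex) \<Rightarrow> 'a \<times> 'a \<times> 'a \<Rightarrow> complex" where
  "cube3 X t = (\<lambda>(x1, x2, x3). X (\<lambda>y. t (y, x2, x3)) x1 + X (\<lambda>y. t (x1, y, x3)) x2
                               + X (\<lambda>y. t (x1, x2, y)) x3)"

definition S3 :: "('a \<Rightarrow> bool) \<Rightarrow> ('a \<times> 'a \<times> 'a \<Rightarrow> complex) set" where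
  "S3 P = {t \<in> tens3 P. \<forall>x1 x2 x3.
      t (x2, x1, x3) = t (x1, x2, x3) \<and> t (x1, x3, x2) = t (x1, x2, x3)}"

definition L3 :: "('a \<Rightarrow> bool) \<Rightarrow> ('a \<times> 'a \<times> 'a \<Rightarrow> complex) set" where
  "L3 P = {t \<in> tens3 P. \<forall>x1 x2 x3.
      t (x2, x1, x3) = - t (x1, x2, x3) \<and> t (x1, x3, x2) = - t (x1, x2, x3)}"

text \<open>Symmetrizer and antisymmetrizer; the mixed-symmetry part M(V) is the
  complement of S^3 V (+) Lambda^3 V, i.e. the common kernel of both projectors.\<close>
definition symz :: "('a \<times> 'a \<times> 'a \<Rightarrow> complex) \<Rightarrow> 'a \<times> 'a \<times> 'a \<Rightarrow> complex" where
  "symz t = (\<lambda>(x1, x2, x3). (t (x1, x2, x3) + t (x2, x3, x1) + t (x3, x1, x2)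
                           + t (x2, x1, x3) + t (x1, x3, x2) + t (x3, x2, x1)) / 6)"

definition altz :: "('a \<times> 'a \<times> 'a \<Rightarrow> complex) \<Rightarrow> 'a \<times> 'a \<times> 'a \<Rightarrow> complex" where
  "altz t = (\<lambda>(x1, x2, x3). (t (x1, x2, x3) + t (x2, x3, x1) + t (x3, x1, x2)
                           - t (x2, x1, x3) - t (x1, x3, x2) - t (x3, x2, x1)) / 6)"

definition M3 :: "('a \<Rightarrow> bool) \<Rightarrow> ('a \<times> 'a \<times> 'a \<Rightarrow> complex) set" where
  "M3 P = {t \<in> tens3 P. symz t = (\<lambda>_. 0) \<and> altz t = (\<lambda>_. 0)}"

definition D_half_embedding ::
  "('v \<Rightarrow> complex) set \<Rightarrow> (('v \<Rightarrow> complex) \<Rightarrow> ('v \<Rightarrow> complex)) \<Rightarrow>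
   (('v \<Rightarrow> complex) \<Rightarrow> ('v \<Rightarrow> complex)) \<Rightarrow> (('v \<Rightarrow> complex) \<Rightarrow> ('v \<Rightarrow> complex)) \<Rightarrow>
   ((nat \<Rightarrow> complex) \<Rightarrow> ('v \<Rightarrow> complex)) \<Rightarrow> bool" where
  "D_half_embedding W E' F' H' \<phi> \<longleftrightarrow>
     lin_on (Dsp 1) \<phi> \<and> inj_on \<phi> (Dsp 1) \<and> \<phi> ` Dsp 1 \<subseteq> W \<and>
     intertwines (Dsp 1) \<phi> (rE 1) E' \<and> intertwines (Dsp 1) \<phi> (rF 1) F' \<and>
     intertwines (Dsp 1) \<phi> (rH 1) H'"

definition D_half_occurs_in :: "nat \<Rightarrow> (nat \<times> nat \<times> nat \<Rightarrow> complex) set \<Rightarrow> bool" where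
  "D_half_occurs_in k W \<longleftrightarrow>
     (\<exists>\<phi>. D_half_embedding W (cube3 (rE k)) (cube3 (rF k)) (cube3 (rH k)) \<phi>)"

text \<open>so(1,3) modules: complexified so(1,3) = sl(2,C) (+) sl(2,C);
  D_(a,b) = D_a (x) D_b with coordinates indexed by pairs (i,j).
  act_fst / act_snd: action of the left / right sl(2) factor.\<close>
definition act_fst :: "((nat \<Rightarrow> complex) \<Rightarrow> nat \<Rightarrow> complex) \<Rightarrow> (nat \<times> nat \<Rightarrow> complex) \<Rightarrow> nat \<times> nat \<Rightarrow> complex" where
  "act_fst X t = (\<lambda>(i, j). X (\<lambda>i'. t (i', j)) i)"

definition act_snd :: "((nat \<Rightarrow> complex) \<Rightarrow> nat \<Rightarrow> complex) \<Rightarrow> (nat \<times> nat \<Rightarrow> complex) \<Rightarrow> nat \<times> nat \<Rightarrow> complex" where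
  "act_snd X t = (\<lambda>(i, j). X (\<lambda>j'. t (i, j')) j)"

definition Dsp2 :: "nat \<Rightarrow> nat \<Rightarrow> (nat \<times> nat \<Rightarrow> complex) set" where
  "Dsp2 k l = {v. \<forall>i j. v (i, j) \<noteq> 0 \<longrightarrow> i \<le> k \<and> j \<le> l}"

definition supp2 :: "nat \<Rightarrow> nat \<Rightarrow> nat \<times> nat \<Rightarrow> bool" where
  "supp2 k l = (\<lambda>(i, j). i \<le> k \<and> j \<le> l)"

definition so13_equivariant_S3 :: "nat \<Rightarrow> nat \<Rightarrow>
    (((nat \<times> nat) \<times> (nat \<times> nat) \<times> (nat \<times> nat) \<Rightarrow> complex) \<Rightarrow> nat \<times> nat \<Rightarrow> complex) \<Rightarrow> bool" where
  "so13_equivariant_S3 k l \<psi> \<longleftrightarrow>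
     (let S = S3 (supp2 k l) in
      lin_on S \<psi> \<and> \<psi> ` S \<subseteq> Dsp2 1 1 \<and>
      intertwines S \<psi> (cube3 (act_fst (rE k))) (act_fst (rE 1)) \<and>
      intertwines S \<psi> (cube3 (act_fst (rF k))) (act_fst (rF 1)) \<and>
      intertwines S \<psi> (cube3 (act_fst (rH k))) (act_fst (rH 1)) \<and>
      intertwines S \<psi> (cube3 (act_snd (rE l))) (act_snd (rE 1)) \<and>
      intertwines S \<psi> (cube3 (act_snd (rF l))) (act_snd (rF 1)) \<and>
      intertwines S \<psi> (cube3 (act_snd (rH l))) (act_snd (rH 1)))"

definition tprod :: "(nat \<times> nat \<times> nat \<Rightarrow> complex) \<Rightarrow> (nat \<times> nat \<times> nat \<Rightarrow> complex) \<Rightarrow>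
    (nat \<times> nat) \<times> (nat \<times> nat) \<times> (nat \<times> nat) \<Rightarrow> complex" where
  "tprod t u = (\<lambda>((i1, j1), (i2, j2), (i3, j3)). t (i1, i2, i3) * u (j1, j2, j3))"

end

theory Submission
  imports Defs "HOL-Computational_Algebra.Polynomial"
begin

lemma supp_finite: "finite {e. coeff (p::'a::zero poly) e \<noteq> 0}"
  by (rule finite_subset[of _ "{..degree p}"]) (auto intro: le_degree)

lemma fewnom:
  fixes q :: "complex poly"
  shows "card {e. coeff ([:1,1:]^N * q) e \<noteq> 0} \<le> N \<Longrightarrow> [:1,1:]^N * q = 0"
proof (induction N arbitrary: q)
  case 0
  then have "{e. coeff q e \<noteq> 0} = {}" using supp_finite[of q] by simp
  then show ?case by (auto intro: poly_eqI)
next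
  case (Suc N)
  define f where "f = [:1,1:]^Suc N * q"
  show ?case
  proof (rule ccontr)
    assume "[:1,1:]^Suc N * q \<noteq> 0"
    then have "f \<noteq> 0" by (simp add: f_def)
    then obtain e0 where e0: "coeff f e0 \<noteq> 0" using poly_eqI[of f 0] by auto
    define g where "g = pCons 0 (pderiv f) - smult (of_nat e0) f"
    have cg: "coeff g e = (of_nat e - of_nat e0) * coeff f e" for e
      by (cases e) (auto simp: g_def coeff_pderiv algebra_simps)
    define q' where "q' = pCons 0 (smult (of_nat (Suc N)) q + [:1,1:] * pderiv q) - smult (of_nat e0) ([:1,1:] * q)"
    have gq: "g = [:1,1:]^N * q'"
    proof -
      define X where "X = [:1,1::complex:]"
      have pX: "pderiv X = 1" by (simp add: pderiv_pCons X_def)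
      have pd: "pderiv f = X^N * (smult (of_nat (Suc N)) q + X * pderiv q)"
        unfolding f_def X_def[symmetric] pderiv_mult pderiv_power_Suc pX
        by (simp add: algebra_simps del: power_Suc) (simp add: mult.assoc[symmetric] power_Suc2 del: power_Suc)
      have pc: "pCons 0 (r * s) = r * pCons 0 s" for r s :: "complex poly"
        by (metis mult_pCons_right mult_zero_left smult_0_left add_0)
      have ff: "f = X^N * (X * q)" unfolding f_def X_def[symmetric] by (simp add: power_Suc2 mult.assoc del: power_Suc)
      show ?thesis unfolding g_def q'_def pd pc X_def[symmetric]
        by (subst ff) (simp add: algebra_simps del: power_Suc)
    qed
    have sub: "{e. coeff g e \<noteq> 0} \<subseteq> {e. coeff f e \<noteq> 0} - {e0}"
      using cg by auto
    have "card {e. coeff g e \<noteq> 0} \<le> card ({e. coeff f e \<noteq> 0} - {e0})"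
      by (rule card_mono) (use sub supp_finite in auto)
    also have "\<dots> = card {e. coeff f e \<noteq> 0} - 1" using e0 supp_finite by simp
    also have "\<dots> \<le> N" using Suc.prems f_def by simp
    finally have "g = 0" using Suc.IH gq by metis
    then have z: "e \<noteq> e0 \<Longrightarrow> coeff f e = 0" for e using cg[of e] by simp
    have "f = monom (coeff f e0) e0" by (rule poly_eqI) (auto simp: z)
    moreover have "poly f (-1) = 0" by (simp add: f_def)
    ultimately have "coeff f e0 * (-1)^e0 = 0" by (metis poly_monom)
    then show False using e0 by simp
  qed
qed

definition om :: complex where "om = Complex (-1/2) (sqrt 3/2)"

lemma om2: "om^2 + om + 1 = 0"
  by (simp add: om_def complex_eq_iff power2_eq_square)

lemma om3: "om^3 = 1"
proof -
  have "om^3 - 1 = (om - 1) * (om^2 + om + 1)" by (simp add: algebra_simps power2_eq_square power3_eq_cube)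
  then show ?thesis using om2 by simp
qed

lemma om_ne1: "om \<noteq> 1" by (simp add: om_def complex_eq_iff)

lemma om_pow3: "om ^ (3*j) = 1" by (simp add: power_mult om3)

definition CC :: "(nat \<Rightarrow> nat \<Rightarrow> complex) \<Rightarrow> nat \<Rightarrow> complex \<Rightarrow> complex \<Rightarrow> complex" where
  "CC c M a b = (\<Sum>p\<le>M. \<Sum>q\<le>M. c p q * a^p * b^q)"

lemma CC_hom:
  assumes supp: "\<And>p q. c p q \<noteq> 0 \<Longrightarrow> p + q = d"
  shows "CC c M (l*a) (l*b) = l^d * CC c M a b"
  unfolding CC_def sum_distrib_left
proof (intro sum.cong refl)
  fix p q
  show "c p q * (l * a) ^ p * (l * b) ^ q = l ^ d * (c p q * a ^ p * b ^ q)"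
  proof (cases "c p q = 0")
    case False
    then have "d = p + q" using supp by auto
    then show ?thesis by (simp add: power_mult_distrib power_add)
  qed simp
qed

lemma card_non3: "card {e::nat. e \<le> 3*d \<and> \<not> 3 dvd e} = 2*d"
proof (induction d)
  case 0
  have "{e::nat. e \<le> 0 \<and> \<not> 3 dvd e} = {}" by auto (metis dvd_0_right gr0I)
  then show ?case by simp
next
  case (Suc d)
  have "{e::nat. e \<le> 3*Suc d \<and> \<not> 3 dvd e} = insert (3*d+1) (insert (3*d+2) {e. e \<le> 3*d \<and> \<not> 3 dvd e})"
    by (auto; presburger)
  moreover have "finite {e::nat. e \<le> 3*d \<and> \<not> 3 dvd e}" by simp
  ultimately show ?case using Suc by simp
qed

lemma poly_sum_le:
  fixes p :: "complex poly"
  assumes "degree p \<le> n"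
  shows "poly p x = (\<Sum>i\<le>n. coeff p i * x^i)"
proof -
  have "poly p x = (\<Sum>i\<le>degree p. coeff p i * x^i)" by (rule poly_altdef)
  also have "\<dots> = (\<Sum>i\<le>n. coeff p i * x^i)"
    by (rule sum.mono_neutral_left) (use assms in \<open>auto simp: coeff_eq_0\<close>)
  finally show ?thesis .
qed

lemma o4: "om^4 = om"
proof -
  have "om^4 = om^3 * om" by (simp add: power_Suc2[symmetric])
  then show ?thesis using om3 by simp
qed

lemma core:
  fixes c :: "nat \<Rightarrow> nat \<Rightarrow> complex"
  assumes supp: "\<And>p q. c p q \<noteq> 0 \<Longrightarrow> p \<le> M \<and> q \<le> M \<and> p + q = d"
  and eq: "\<And>u. (u+1)^(2*d) * CC c M (om*u+om^2) (om^2*u+om)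
              + (om*u+om^2)^(2*d) * CC c M (om^2*u+om) (u+1)
              + (om^2*u+om)^(2*d) * CC c M (u+1) (om*u+om^2) = 0"
  shows "c p q = 0"
proof -
  have hom: "CC c M (l*a) (l*b) = l^d * CC c M a b" for l a b
    by (rule CC_hom) (use supp in blast)
  define T where "T u = (u+1)^(2*d) * CC c M (om*u+om^2) (om^2*u+om)" for u
  have t2: "(om*u+om^2)^(2*d) * CC c M (om^2*u+om) (u+1) = T (om^2*u)" for u
  proof -
    have a: "om*u+om^2 = om^2*(om^2*u+1)" using om3 by (algebra | simp add: algebra_simps power2_eq_square)
    have b: "om^2*u+om = om^2*(u+om^2)" using om3 by (algebra | simp add: algebra_simps power2_eq_square)
    have c: "u+1 = om^2*(om*u+om)" using om3 by (algebra | simp add: algebra_simps power2_eq_square)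
    have b2: "om*(om^2*u)+om^2 = u+om^2" using om3 by (algebra | simp add: algebra_simps power2_eq_square)
    have c2: "om^2*(om^2*u)+om = om*u+om" using om3 by (algebra | simp add: algebra_simps power2_eq_square)
    have p: "(om^2)^(2*d) * (om^2)^d = 1"
    proof -
      have "(om^2)^(2*d) * (om^2)^d = om^(3*(2*d))" by (simp add: power_add[symmetric] power_mult[symmetric])
      then show ?thesis using om_pow3[of "2*d"] by simp
    qed
    have "(om*u+om^2)^(2*d) * CC c M (om^2*u+om) (u+1)
        = (om^2*(om^2*u+1))^(2*d) * CC c M (om^2*(u+om^2)) (om^2*(om*u+om))"
      by (simp only: a b c)
    also have "\<dots> = (om^2)^(2*d) * (om^2*u+1)^(2*d) * ((om^2)^d * CC c M (u+om^2) (om*u+om))"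
      by (simp only: hom power_mult_distrib)
    also have "\<dots> = ((om^2)^(2*d) * (om^2)^d) * ((om^2*u+1)^(2*d) * CC c M (u+om^2) (om*u+om))"
      by (simp add: algebra_simps)
    also have "\<dots> = T (om^2*u)" unfolding p T_def b2 c2 by (simp add: add.commute)
    finally show ?thesis .
  qed
  have t3: "(om^2*u+om)^(2*d) * CC c M (u+1) (om*u+om^2) = T (om*u)" for u
  proof -
    have a: "om^2*u+om = om*(om*u+1)" by (simp add: algebra_simps power2_eq_square)
    have b: "u+1 = om*(om^2*u+om^2)" using om3 by (algebra | simp add: algebra_simps power2_eq_square)
    have c: "om*u+om^2 = om*(u+om)" using om3 by (algebra | simp add: algebra_simps power2_eq_square)
    have b2: "om*(om*u)+om^2 = om^2*u+om^2" using om3 by (algebra | simp add: algebra_simps power2_eq_square)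
    have c2: "om^2*(om*u)+om = u+om" using om3 by (algebra | simp add: algebra_simps power2_eq_square)
    have p: "om^(2*d) * om^d = 1"
    proof -
      have "om^(2*d) * om^d = om^(3*d)" by (simp add: power_add[symmetric])
      then show ?thesis using om_pow3 by simp
    qed
    have "(om^2*u+om)^(2*d) * CC c M (u+1) (om*u+om^2)
        = om^(2*d) * (om*u+1)^(2*d) * (om^d * CC c M (om^2*u+om^2) (u+om))"
      by (subst a, subst b, subst c, subst hom) (simp add: power_mult_distrib)
    also have "\<dots> = (om^(2*d) * om^d) * ((om*u+1)^(2*d) * CC c M (om^2*u+om^2) (u+om))"
      by (simp add: algebra_simps)
    also have "\<dots> = T (om*u)" unfolding p T_def b2 c2 by (simp add: add.commute)
    finally show ?thesis .
  qed
  have sumT: "T u + T (om*u) + T (om^2*u) = 0" for u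
    using eq[of u] t2[of u] t3[of u] unfolding T_def by (simp add: algebra_simps)
  define Ct where "Ct = (\<Sum>p\<le>M. \<Sum>q\<le>M. smult (c p q) ([:om^2, om:]^p * [:om, om^2:]^q))"
  have pCt: "poly Ct u = CC c M (om*u+om^2) (om^2*u+om)" for u
    unfolding Ct_def CC_def by (simp add: poly_sum algebra_simps)
  have dCt: "degree Ct \<le> d"
    unfolding Ct_def
  proof (intro degree_sum_le)
    fix p q
    show "degree (smult (c p q) ([:om^2, om:]^p * [:om, om^2:]^q)) \<le> d"
    proof (cases "c p q = 0")
      case False
      then have pq: "p + q = d" using supp by auto
      have "degree ([:om^2, om:]^p * [:om, om^2:]^q) \<le> degree ([:om^2, om:]^p) + degree ([:om, om^2:]^q)"
        by (rule degree_mult_le)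
      also have "\<dots> \<le> degree [:om^2, om:] * p + degree [:om, om^2:] * q"
        by (intro add_mono degree_power_le)
      also have "\<dots> \<le> 1 * p + 1 * q"
        by (intro add_mono mult_right_mono) auto
      finally show ?thesis using pq degree_smult_le order_trans by fastforce
    qed simp
  qed auto
  define tau where "tau = [:1,1:]^(2*d) * Ct"
  have ptau: "poly tau u = T u" for u unfolding tau_def T_def by (simp add: pCt add.commute)
  have dtau: "degree tau \<le> 3*d"
  proof -
    have "degree tau \<le> degree ([:1,1::complex:]^(2*d)) + degree Ct" unfolding tau_def by (rule degree_mult_le)
    also have "\<dots> \<le> 1 * (2*d) + d"
      by (intro add_mono dCt order_trans[OF degree_power_le]) auto
    finally show ?thesis by simp
  qed
  have allz: "\<forall>u. (\<Sum>i\<le>3*d. (coeff tau i * (1 + om^i + (om^2)^i)) * u^i) = 0"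
  proof
    fix u
    have "(\<Sum>i\<le>3*d. (coeff tau i * (1 + om^i + (om^2)^i)) * u^i)
        = (\<Sum>i\<le>3*d. coeff tau i * u^i) + (\<Sum>i\<le>3*d. coeff tau i * (om*u)^i) + (\<Sum>i\<le>3*d. coeff tau i * (om^2*u)^i)"
      by (simp add: sum.distrib[symmetric] power_mult_distrib algebra_simps)
    also have "\<dots> = T u + T (om*u) + T (om^2*u)"
      using poly_sum_le[OF dtau] ptau by simp
    finally show "(\<Sum>i\<le>3*d. (coeff tau i * (1 + om^i + (om^2)^i)) * u^i) = 0" using sumT by simp
  qed
  then have cz: "coeff tau i * (1 + om^i + (om^2)^i) = 0" if "i \<le> 3*d" for i
    using iffD1[OF polyfun_eq_0 allz] that by blast
  have c3: "coeff tau i = 0" if "3 dvd i" for i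
  proof (cases "i \<le> 3*d")
    case True
    from that obtain j where "i = 3*j" by auto
    then have o1: "om^i = 1" using om_pow3 by simp
    have "(om^2)^i = (om^i)^2" by (simp add: power_mult[symmetric] mult.commute)
    with o1 have "om^i = 1" "(om^2)^i = 1" by simp_all
    then show ?thesis using cz[OF True] by simp
  next
    case False then show ?thesis using dtau by (simp add: coeff_eq_0)
  qed
  have "{e. coeff tau e \<noteq> 0} \<subseteq> {e. e \<le> 3*d \<and> \<not> 3 dvd e}"
  proof
    fix e assume "e \<in> {e. coeff tau e \<noteq> 0}"
    then have ne: "coeff tau e \<noteq> 0" by simp
    then have "e \<le> degree tau" by (rule le_degree)
    with dtau have "e \<le> 3*d" by linarith
    moreover have "\<not> 3 dvd e" using c3 ne by blast
    ultimately show "e \<in> {e. e \<le> 3*d \<and> \<not> 3 dvd e}" by simp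
  qed
  then have "card {e. coeff tau e \<noteq> 0} \<le> 2*d"
    using card_mono[of "{e. e \<le> 3*d \<and> \<not> 3 dvd e}"] card_non3[of d] by simp
  then have "tau = 0" unfolding tau_def by (rule fewnom)
  then have "Ct = 0" unfolding tau_def by simp
  then have Cz: "CC c M (om*u+om^2) (om^2*u+om) = 0" for u using pCt[of u] by simp
  have Ca: "CC c M a 1 = 0" if "a \<noteq> om^2" for a
  proof -
    define t where "t = (a - om)/(om - 1)"
    define s where "s = om*(om - t)"
    have om1: "om - 1 \<noteq> 0" using om_ne1 by simp
    have ta: "t*(om - 1) = a - om" unfolding t_def using om1 by simp
    have "s \<noteq> 0"
    proof
      assume "s = 0"
      moreover have "om \<noteq> 0" by (simp add: om_def complex_eq_iff)
      ultimately have "t = om" unfolding s_def by simp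
      then have "a = om*(om-1) + om" using ta by simp
      also have "\<dots> = om^2" by (simp add: algebra_simps power2_eq_square)
      finally show False using that by simp
    qed
    define u where "u = t/s"
    have e1: "s*(om*u+om^2) = a"
    proof -
      have "s*(om*u+om^2) = om*t + om^2*s" unfolding u_def using \<open>s\<noteq>0\<close> by (simp add: field_simps)
      also have "\<dots> = t*(om - 1) + om" unfolding s_def using om3 by algebra
      finally show ?thesis using ta by simp
    qed
    have e2: "s*(om^2*u+om) = 1"
    proof -
      have "s*(om^2*u+om) = om^2*t + om*s" unfolding u_def using \<open>s\<noteq>0\<close> by (simp add: field_simps)
      also have "\<dots> = 1" unfolding s_def using om3 by algebra
      finally show ?thesis .
    qed
    have "CC c M a 1 = s^d * CC c M (om*u+om^2) (om^2*u+om)"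
      using hom[of s "om*u+om^2" "om^2*u+om"] e1 e2 by simp
    then show ?thesis using Cz by simp
  qed
  define Cp where "Cp = (\<Sum>p\<le>M. \<Sum>q\<le>M. smult (c p q) (monom 1 p))"
  have pCp: "poly Cp a = CC c M a 1" for a
    unfolding Cp_def CC_def by (simp add: poly_sum poly_monom)
  have "Cp = 0"
  proof (rule ccontr)
    assume "Cp \<noteq> 0"
    then have "finite {a. poly Cp a = 0}" by (rule poly_roots_finite)
    moreover have "- {om^2} \<subseteq> {a. poly Cp a = 0}" using Ca pCp by auto
    ultimately have "finite (- {om^2::complex})" by (rule finite_subset[rotated])
    then show False by (simp add: infinite_UNIV_char_0)
  qed
  show ?thesis
  proof (rule ccontr)
    assume nz: "c p q \<noteq> 0"
    then have pq: "p \<le> M" "q \<le> M" "p + q = d" using supp by auto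
    have "coeff Cp p = (\<Sum>p'\<le>M. \<Sum>q'\<le>M. c p' q' * (if p' = p then 1 else 0))"
      unfolding Cp_def coeff_sum coeff_smult coeff_monom by simp
    also have "\<dots> = (\<Sum>p'\<le>M. if p' = p then (\<Sum>q'\<le>M. c p q') else 0)"
      by (rule sum.cong) auto
    also have "\<dots> = (\<Sum>q'\<le>M. c p q')" using pq by simp
    also have "\<dots> = (\<Sum>q'\<le>M. if q' = q then c p q else 0)"
    proof (rule sum.cong)
      fix q' assume "q' \<in> {..M}"
      show "c p q' = (if q' = q then c p q else 0)"
        using supp[of p q'] pq by (cases "c p q' = 0") auto
    qed simp
    also have "\<dots> = c p q" using pq by simp
    finally show False using \<open>Cp = 0\<close> nz by simp
  qed
qed

lemma shift':
  fixes f :: "nat \<Rightarrow> complex"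
  shows "x * (\<Sum>a\<le>k. x^a * f a) = (\<Sum>a\<le>k. x^a * (if a = 0 then 0 else f (a-1))) + x^Suc k * f k"
  by (induction k) (auto simp: algebra_simps)

lemma if_sum0:
  fixes g :: "nat \<Rightarrow> complex"
  shows "(if P then 0 else (\<Sum>c\<le>k. z^c * g c)) = (\<Sum>c\<le>k. z^c * (if P then 0 else g c))"
  by (cases P) simp_all

definition PP :: "(nat \<times> nat \<times> nat \<Rightarrow> complex) \<Rightarrow> nat \<Rightarrow> complex \<Rightarrow> complex \<Rightarrow> complex \<Rightarrow> complex" where
  "PP w k x y z = (\<Sum>a\<le>k. x^a * (\<Sum>b\<le>k. y^b * (\<Sum>c\<le>k. z^c * w(a,b,c))))"

lemma PP_add: "PP (\<lambda>i. f i + g i) k x y z = PP f k x y z + PP g k x y z"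
  unfolding PP_def by (simp add: sum.distrib distrib_left)

lemma PP_cong: "(\<And>a b c. a \<le> k \<Longrightarrow> b \<le> k \<Longrightarrow> c \<le> k \<Longrightarrow> f(a,b,c) = g(a,b,c)) \<Longrightarrow> PP f k x y z = PP g k x y z"
  unfolding PP_def by (intro sum.cong refl arg_cong2[where f="(*)"]) auto

lemma PP_zero: "PP (\<lambda>_. 0) k x y z = 0" unfolding PP_def by simp

lemma zsh: "z * PP w k x y z = PP (\<lambda>(a,b,c). if c = 0 then 0 else w(a,b,c-1)) k x y z
     + z^Suc k * (\<Sum>a\<le>k. x^a * (\<Sum>b\<le>k. y^b * w(a,b,k)))"
proof -
  have "z * PP w k x y z = (\<Sum>a\<le>k. x^a * (\<Sum>b\<le>k. y^b * (z * (\<Sum>c\<le>k. z^c * w(a,b,c)))))"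
    unfolding PP_def by (simp add: sum_distrib_left mult_ac)
  also have "\<dots> = (\<Sum>a\<le>k. x^a * (\<Sum>b\<le>k. y^b * ((\<Sum>c\<le>k. z^c * (if c = 0 then 0 else w(a,b,c-1))) + z^Suc k * w(a,b,k))))"
    by (simp only: shift')
  also have "\<dots> = PP (\<lambda>(a,b,c). if c = 0 then 0 else w(a,b,c-1)) k x y z
     + z^Suc k * (\<Sum>a\<le>k. x^a * (\<Sum>b\<le>k. y^b * w(a,b,k)))"
    unfolding PP_def by (simp add: sum.distrib distrib_left sum_distrib_left mult_ac)
  finally show ?thesis .
qed

lemma ysh: "y * PP w k x y z = PP (\<lambda>(a,b,c). if b = 0 then 0 else w(a,b-1,c)) k x y z
     + y^Suc k * (\<Sum>a\<le>k. x^a * (\<Sum>c\<le>k. z^c * w(a,k,c)))"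
proof -
  have "y * PP w k x y z = (\<Sum>a\<le>k. x^a * (y * (\<Sum>b\<le>k. y^b * (\<Sum>c\<le>k. z^c * w(a,b,c)))))"
    unfolding PP_def by (simp add: sum_distrib_left mult_ac)
  also have "\<dots> = (\<Sum>a\<le>k. x^a * ((\<Sum>b\<le>k. y^b * (if b = 0 then 0 else (\<Sum>c\<le>k. z^c * w(a,b-1,c)))) + y^Suc k * (\<Sum>c\<le>k. z^c * w(a,k,c))))"
    by (simp only: shift')
  also have "\<dots> = (\<Sum>a\<le>k. x^a * ((\<Sum>b\<le>k. y^b * (\<Sum>c\<le>k. z^c * (if b = 0 then 0 else w(a,b-1,c)))) + y^Suc k * (\<Sum>c\<le>k. z^c * w(a,k,c))))"
    by (simp only: if_sum0)
  also have "\<dots> = PP (\<lambda>(a,b,c). if b = 0 then 0 else w(a,b-1,c)) k x y z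
     + y^Suc k * (\<Sum>a\<le>k. x^a * (\<Sum>c\<le>k. z^c * w(a,k,c)))"
    unfolding PP_def by (simp add: sum.distrib distrib_left sum_distrib_left mult_ac)
  finally show ?thesis .
qed

lemma xsh: "x * PP w k x y z = PP (\<lambda>(a,b,c). if a = 0 then 0 else w(a-1,b,c)) k x y z
     + x^Suc k * (\<Sum>b\<le>k. y^b * (\<Sum>c\<le>k. z^c * w(k,b,c)))"
proof -
  have "x * PP w k x y z = (\<Sum>a\<le>k. x^a * (if a = 0 then 0 else (\<Sum>b\<le>k. y^b * (\<Sum>c\<le>k. z^c * w(a-1,b,c))))) + x^Suc k * (\<Sum>b\<le>k. y^b * (\<Sum>c\<le>k. z^c * w(k,b,c)))"
    unfolding PP_def by (simp only: shift')
  also have "\<dots> = (\<Sum>a\<le>k. x^a * (\<Sum>b\<le>k. y^b * (\<Sum>c\<le>k. z^c * (if a = 0 then 0 else w(a-1,b,c))))) + x^Suc k * (\<Sum>b\<le>k. y^b * (\<Sum>c\<le>k. z^c * w(k,b,c)))"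
    by (simp only: if_sum0)
  also have "\<dots> = PP (\<lambda>(a,b,c). if a = 0 then 0 else w(a-1,b,c)) k x y z
     + x^Suc k * (\<Sum>b\<le>k. y^b * (\<Sum>c\<le>k. z^c * w(k,b,c)))"
    unfolding PP_def by simp
  finally show ?thesis .
qed

lemma Fcond:
  assumes "cube3 (rF k) w = (\<lambda>_. 0)" "a \<le> k" "b \<le> k" "c \<le> k"
  shows "(if a = 0 then 0 else w(a-1,b,c)) + (if b = 0 then 0 else w(a,b-1,c)) + (if c = 0 then 0 else w(a,b,c-1)) = 0"
  using fun_cong[OF assms(1), of "(a,b,c)"] assms(2-4) by (simp add: cube3_def rF_def)

lemma lP:
  assumes F: "cube3 (rF k) w = (\<lambda>_. 0)"
  and cyc: "\<And>a b c. w(a,b,c) = w(b,c,a)"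
  shows "(x+y+z) * PP w k x y z = x^Suc k * CC (\<lambda>p q. w(p,q,k)) k y z
      + y^Suc k * CC (\<lambda>p q. w(p,q,k)) k z x + z^Suc k * CC (\<lambda>p q. w(p,q,k)) k x y"
proof -
  have s0: "PP (\<lambda>(a,b,c). if a = 0 then 0 else w(a-1,b,c)) k x y z + PP (\<lambda>(a,b,c). if b = 0 then 0 else w(a,b-1,c)) k x y z
      + PP (\<lambda>(a,b,c). if c = 0 then 0 else w(a,b,c-1)) k x y z = 0"
  proof -
    have "PP (\<lambda>(a,b,c). if a = 0 then 0 else w(a-1,b,c)) k x y z + PP (\<lambda>(a,b,c). if b = 0 then 0 else w(a,b-1,c)) k x y z
      + PP (\<lambda>(a,b,c). if c = 0 then 0 else w(a,b,c-1)) k x y z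
      = PP (\<lambda>i. (\<lambda>(a,b,c). if a = 0 then 0 else w(a-1,b,c)) i + (\<lambda>(a,b,c). if b = 0 then 0 else w(a,b-1,c)) i
           + (\<lambda>(a,b,c). if c = 0 then 0 else w(a,b,c-1)) i) k x y z"
      by (simp only: PP_add)
    also have "\<dots> = PP (\<lambda>_. 0) k x y z"
      by (rule PP_cong) (use Fcond[OF F] in simp)
    finally show ?thesis by (simp add: PP_zero)
  qed
  have rx: "(\<Sum>b\<le>k. y^b * (\<Sum>c\<le>k. z^c * w(k,b,c))) = CC (\<lambda>p q. w(p,q,k)) k y z"
    unfolding CC_def sum_distrib_left
    by (intro sum.cong refl) (simp add: cyc[of k] mult_ac)
  have ry: "(\<Sum>a\<le>k. x^a * (\<Sum>c\<le>k. z^c * w(a,k,c))) = CC (\<lambda>p q. w(p,q,k)) k z x"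
  proof -
    have "(\<Sum>a\<le>k. x^a * (\<Sum>c\<le>k. z^c * w(a,k,c))) = (\<Sum>a\<le>k. \<Sum>c\<le>k. w(c,a,k) * z^c * x^a)"
      unfolding sum_distrib_left
      by (intro sum.cong refl) (metis cyc mult.commute mult.left_commute)
    also have "\<dots> = CC (\<lambda>p q. w(p,q,k)) k z x" unfolding CC_def by (rule sum.swap)
    finally show ?thesis .
  qed
  have rz: "(\<Sum>a\<le>k. x^a * (\<Sum>b\<le>k. y^b * w(a,b,k))) = CC (\<lambda>p q. w(p,q,k)) k x y"
    unfolding CC_def sum_distrib_left by (intro sum.cong refl) (simp add: mult_ac)
  have "(x+y+z) * PP w k x y z = x * PP w k x y z + y * PP w k x y z + z * PP w k x y z"
    by (simp add: distrib_right)
  also have "\<dots> = x^Suc k * CC (\<lambda>p q. w(p,q,k)) k y z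
      + y^Suc k * CC (\<lambda>p q. w(p,q,k)) k z x + z^Suc k * CC (\<lambda>p q. w(p,q,k)) k x y"
    unfolding xsh ysh zsh rx ry rz using s0 by (simp add: algebra_simps)
  finally show ?thesis .
qed

lemma key:
  fixes w :: "nat \<times> nat \<times> nat \<Rightarrow> complex"
  assumes kd: "Suc k = 2*d"
  and supp: "\<And>a b c. w(a,b,c) \<noteq> 0 \<Longrightarrow> a \<le> k \<and> b \<le> k \<and> c \<le> k \<and> Suc (a+b+c) = 3*d"
  and cyc: "\<And>a b c. w(a,b,c) = w(b,c,a)"
  and F: "cube3 (rF k) w = (\<lambda>_. 0)"
  shows "w = (\<lambda>_. 0)"
proof -
  have top: "w(p,q,k) = 0" for p q
  proof (rule core[where M=k and d=d and c="\<lambda>p q. w(p,q,k)"])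
    fix p q assume "w(p,q,k) \<noteq> 0"
    then show "p \<le> k \<and> q \<le> k \<and> p + q = d" proof -
      have "Suc (p+q+k) = 3*d" using supp \<open>w(p,q,k) \<noteq> 0\<close> by blast
      moreover have "p \<le> k \<and> q \<le> k" using supp \<open>w(p,q,k) \<noteq> 0\<close> by blast
      ultimately show ?thesis using kd by linarith
    qed
  next
    fix u :: complex
    define x where "x = u+1"
    define y where "y = om*u+om^2"
    define z where "z = om^2*u+om"
    have "x+y+z = (u+1)*(om^2+om+1)" unfolding x_def y_def z_def by (simp add: algebra_simps)
    then have "x+y+z = 0" using om2 by simp
    then have "x^Suc k * CC (\<lambda>p q. w(p,q,k)) k y z
      + y^Suc k * CC (\<lambda>p q. w(p,q,k)) k z x + z^Suc k * CC (\<lambda>p q. w(p,q,k)) k x y = 0"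
      using lP[OF F cyc, of x y z] by simp
    then show "(u+1)^(2*d) * CC (\<lambda>p q. w(p,q,k)) k (om*u+om^2) (om^2*u+om)
              + (om*u+om^2)^(2*d) * CC (\<lambda>p q. w(p,q,k)) k (om^2*u+om) (u+1)
              + (om^2*u+om)^(2*d) * CC (\<lambda>p q. w(p,q,k)) k (u+1) (om*u+om^2) = 0"
      unfolding x_def y_def z_def kd .
  qed
  have allm: "\<forall>a b. w(a,b,k - m) = 0" for m
  proof (induction m)
    case 0 then show ?case using top by simp
  next
    case (Suc m)
    show ?case
    proof (intro allI)
      fix a b
      show "w(a,b,k - Suc m) = 0"
      proof (cases "m < k \<and> a \<le> k \<and> b \<le> k")
        case True
        have c1: "k - m \<le> k" "k - m \<noteq> 0" "k - m - 1 = k - Suc m" using True by auto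
        have h: "(if a = 0 then 0 else w(a-1,b,k-m)) + (if b = 0 then 0 else w(a,b-1,k-m))
                 + (if k - m = 0 then 0 else w(a,b,k-m-1)) = 0"
          by (rule Fcond[OF F]) (use True c1 in auto)
        have h3: "(if k - m = 0 then 0 else w(a,b,k-m-1)) = w(a,b,k - Suc m)" using c1 by simp
        have h1: "(if a = 0 then 0 else w(a-1,b,k-m)) = 0" using Suc.IH by simp
        have h2: "(if b = 0 then 0 else w(a,b-1,k-m)) = 0" using Suc.IH by simp
        show ?thesis using h unfolding h1 h2 h3 by simp
      next
        case False
        then show ?thesis
        proof (cases "m < k")
          case True
          with False have "\<not> (a \<le> k \<and> b \<le> k)" by simp
          then show ?thesis using supp[of a b "k - Suc m"] by auto
        next
          case False
          then have "k - Suc m = k - m" by simp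
          then show ?thesis using Suc.IH by simp
        qed
      qed
    qed
  qed
  have "w(a,b,c) = 0" for a b c
  proof (cases "c \<le> k")
    case True
    then show ?thesis using allm[of "k - c"] by simp
  next
    case False
    then show ?thesis using supp[of a b c] by auto
  qed
  then show ?thesis by auto
qed

definition proj :: "complex \<Rightarrow> ('a \<times> 'a \<times> 'a \<Rightarrow> complex) \<Rightarrow> 'a \<times> 'a \<times> 'a \<Rightarrow> complex" where
  "proj e t = (\<lambda>(x1, x2, x3). (t (x1, x2, x3) + t (x2, x3, x1) + t (x3, x1, x2)
       + e * (t (x2, x1, x3) + t (x1, x3, x2) + t (x3, x2, x1))) / 6)"

definition Sym :: "complex \<Rightarrow> ('a \<Rightarrow> bool) \<Rightarrow> ('a \<times> 'a \<times> 'a \<Rightarrow> complex) set" where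
  "Sym e P = {t \<in> tens3 P. \<forall>x1 x2 x3. t (x2, x1, x3) = e * t (x1, x2, x3) \<and> t (x1, x3, x2) = e * t (x1, x2, x3)}"

lemma S3_Sym: "S3 P = Sym 1 P" unfolding S3_def Sym_def by simp
lemma L3_Sym: "L3 P = Sym (-1) P" unfolding L3_def Sym_def by simp
lemma symz_proj: "symz = proj 1" unfolding symz_def proj_def by (simp add: add.assoc)
lemma altz_proj: "altz = proj (-1)" unfolding altz_def proj_def by (simp add: fun_eq_iff algebra_simps)

definition loc :: "(('a \<Rightarrow> complex) \<Rightarrow> 'a \<Rightarrow> complex) \<Rightarrow> ('a \<Rightarrow> complex) \<Rightarrow> ('a \<Rightarrow> 'a) \<Rightarrow> bool" where
  "loc X g h \<longleftrightarrow> (\<forall>v i. X v i = g i * v (h i))"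

lemma loc_rE: "loc (rE k) (\<lambda>i. of_nat (Suc i) * of_nat (k - i)) Suc"
  unfolding loc_def rE_def by simp
lemma loc_rF: "loc (rF k) (\<lambda>i. if i = 0 \<or> k < i then 0 else 1) (\<lambda>i. i - 1)"
  unfolding loc_def rF_def by simp
lemma loc_rH: "loc (rH k) (\<lambda>i. complex_of_int (int k - 2 * int i)) id"
  unfolding loc_def rH_def by simp

lemma cube3_loc: "loc X g h \<Longrightarrow> cube3 X t = (\<lambda>(a,b,c). g a * t (h a, b, c) + g b * t (a, h b, c) + g c * t (a, b, h c))"
  unfolding loc_def cube3_def by simp

definition NN :: "complex \<Rightarrow> ('a \<times> 'a \<times> 'a \<Rightarrow> complex) \<Rightarrow> 'a \<times> 'a \<times> 'a \<Rightarrow> complex" where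
  "NN e t x = (case x of (x1, x2, x3) \<Rightarrow> t (x1, x2, x3) + t (x2, x3, x1) + t (x3, x1, x2)
       + e * (t (x2, x1, x3) + t (x1, x3, x2) + t (x3, x2, x1)))"
lemma proj_NN: "proj e t x = NN e t x / 6" unfolding proj_def NN_def by (cases x) auto
lemma proj_NN': "proj e t = (\<lambda>x. NN e t x / 6)" by (rule ext) (rule proj_NN)

lemma proj_cube3: assumes "loc X g h" shows "cube3 X (proj e t) = proj e (cube3 X t)"
proof (rule ext, clarify)
  fix a b c
  have "cube3 X (\<lambda>x. NN e t x / 6) (a,b,c) = (g a * NN e t (h a, b, c) + g b * NN e t (a, h b, c) + g c * NN e t (a, b, h c)) / 6"
    unfolding cube3_loc[OF assms] by (simp add: add_divide_distrib)
  also have "g a * NN e t (h a, b, c) + g b * NN e t (a, h b, c) + g c * NN e t (a, b, h c) = NN e (cube3 X t) (a,b,c)"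
    unfolding cube3_loc[OF assms] NN_def by (simp add: algebra_simps)
  finally show "cube3 X (proj e t) (a,b,c) = proj e (cube3 X t) (a,b,c)" unfolding proj_NN' by simp
qed

lemma Sym_cyc:
  assumes "t \<in> Sym e P" "e * e = 1"
  shows "t (a,b,c) = t (b,c,a)"
proof -
  have h: "t (x2, x1, x3) = e * t (x1, x2, x3)" "t (x1, x3, x2) = e * t (x1, x2, x3)" for x1 x2 x3
    using assms(1) unfolding Sym_def by blast+
  have "t (a,b,c) = e * t (b,a,c)" using h(1)[of a b c] .
  also have "t (b,a,c) = e * t (b,c,a)" using h(2)[of b a c] .
  finally show ?thesis using assms(2) by (simp add: mult.assoc[symmetric])
qed

lemma Sym_proj:
  assumes "t \<in> Sym e P" "e * e = 1"
  shows "proj e t = t"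
proof -
  have h: "t (x2, x1, x3) = e * t (x1, x2, x3)" "t (x1, x3, x2) = e * t (x1, x2, x3)" for x1 x2 x3
    using assms(1) unfolding Sym_def by blast+
  have c: "t (a,b,c) = t (b,c,a)" for a b c by (rule Sym_cyc[OF assms])
  show ?thesis
  proof (rule ext, clarify)
    fix a b c
    have "t (c,b,a) = e * t (b,c,a)" using h(1)[of c b a] .
    then have f1: "t (c,b,a) = e * t (a,b,c)" using c[of a b c] by simp
    have f2: "t (b,a,c) = e * t (a,b,c)" using h(1)[of b a c] .
    have f3: "t (a,c,b) = e * t (a,b,c)" using h(2)[of a c b] .
    have f4: "t (c,a,b) = t (a,b,c)" using c[of c a b] c[of a b c] by simp
    have f5: "t (b,c,a) = t (a,b,c)" using c[of a b c] by simp
    have "NN e t (a,b,c) = t (a,b,c) + t (b,c,a) + t (c,a,b) + e * (t (b,a,c) + t (a,c,b) + t (c,b,a))"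
      by (simp add: NN_def)
    also have "\<dots> = t (a,b,c) + t (a,b,c) + t (a,b,c) + e * (e * t (a,b,c) + e * t (a,b,c) + e * t (a,b,c))"
      by (simp only: f1 f2 f3 f4 f5)
    also have "\<dots> = 3 * t (a,b,c) + 3 * (e * e) * t (a,b,c)" by (simp add: algebra_simps)
    finally have "NN e t (a,b,c) = 3 * t (a,b,c) + 3 * (e * e) * t (a,b,c)" .
    then have "NN e t (a,b,c) = 6 * t (a,b,c)" using assms(2) by simp
    then show "proj e t (a,b,c) = t (a,b,c)" unfolding proj_NN by simp
  qed
qed

lemma proj_Sym:
  assumes "f \<in> tens3 P" "e * e = 1"
  shows "proj e f \<in> Sym e P"
proof -
  have "proj e f \<in> tens3 P"
    unfolding tens3_def
  proof (clarify)
    fix x1 x2 x3 assume nz: "proj e f (x1, x2, x3) \<noteq> 0"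
    show "P x1 \<and> P x2 \<and> P x3"
    proof (rule ccontr)
      assume n: "\<not> (P x1 \<and> P x2 \<and> P x3)"
      have sp: "f (a,b,c) \<noteq> 0 \<Longrightarrow> P a \<and> P b \<and> P c" for a b c
        using assms(1) unfolding tens3_def by blast
      have "f (x1,x2,x3) = 0" using sp[of x1 x2 x3] n by blast
      moreover have "f (x2,x3,x1) = 0" using sp[of x2 x3 x1] n by blast
      moreover have "f (x3,x1,x2) = 0" using sp[of x3 x1 x2] n by blast
      moreover have "f (x2,x1,x3) = 0" using sp[of x2 x1 x3] n by blast
      moreover have "f (x1,x3,x2) = 0" using sp[of x1 x3 x2] n by blast
      moreover have "f (x3,x2,x1) = 0" using sp[of x3 x2 x1] n by blast
      ultimately show False using nz by (simp add: proj_def)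
    qed
  qed
  moreover have "proj e f (x2, x1, x3) = e * proj e f (x1, x2, x3) \<and> proj e f (x1, x3, x2) = e * proj e f (x1, x2, x3)" for x1 x2 x3
  proof -
    define A where "A = f (x1, x2, x3) + f (x2, x3, x1) + f (x3, x1, x2)"
    define B where "B = f (x2, x1, x3) + f (x1, x3, x2) + f (x3, x2, x1)"
    have aux: "(B + e*A)/6 = e*((A + e*B)/6)"
    proof -
      have "e*(A + e*B) = e*A + (e*e)*B" by (simp add: algebra_simps)
      then have "e*(A + e*B) = B + e*A" using assms(2) by simp
      then show ?thesis by simp
    qed
    have n1: "NN e f (x2, x1, x3) = B + e*A" unfolding NN_def A_def B_def by (simp add: add_ac)
    have n2: "NN e f (x1, x3, x2) = B + e*A" unfolding NN_def A_def B_def by (simp add: add_ac)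
    have n3: "NN e f (x1, x2, x3) = A + e*B" unfolding NN_def A_def B_def by simp
    show ?thesis unfolding proj_NN n1 n2 n3 aux by simp
  qed
  ultimately show ?thesis unfolding Sym_def by blast
qed

lemma NN_add: "NN e (\<lambda>x. f x + g x) x = NN e f x + NN e g x"
  by (cases x) (simp add: NN_def algebra_simps)
lemma NN_smult: "NN e (\<lambda>x. c * f x) x = c * NN e f x"
  by (cases x) (simp add: NN_def algebra_simps)
lemma NN_cyc: "NN e (\<lambda>(x1,x2,x3). f (x3,x1,x2)) x = NN e f x"
  by (cases x) (simp add: NN_def algebra_simps)
lemma proj_add: "proj e (\<lambda>x. f x + g x) = (\<lambda>x. proj e f x + proj e g x)"
  unfolding proj_NN' NN_add by (simp add: add_divide_distrib)
lemma proj_smult: "proj e (\<lambda>x. c * f x) = (\<lambda>x. c * proj e f x)"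
  unfolding proj_NN' NN_smult by simp
lemma proj_cyc: "proj e (\<lambda>(x1,x2,x3). f (x3,x1,x2)) = proj e f"
  unfolding proj_NN' NN_cyc ..
lemma proj_zero: "proj e (\<lambda>x. 0) = (\<lambda>x. 0)"
  unfolding proj_def by (simp add: fun_eq_iff)

lemma lowest_zero:
  assumes tt: "t \<in> tens3 (\<lambda>i::nat. i \<le> k)"
  and cyc: "\<And>a b c. t(a,b,c) = t(b,c,a)"
  and F: "cube3 (rF k) t = (\<lambda>_. 0)"
  and H: "cube3 (rH k) t = (\<lambda>x. -1 * t x)"
  shows "t = (\<lambda>_. 0)"
proof -
  have lev: "2*(a+b+c) = 3*k+1" if nz: "t(a,b,c) \<noteq> 0" for a b c
  proof -
    have "complex_of_int (int k - 2*int a) * t(a,b,c) + complex_of_int (int k - 2*int b) * t(a,b,c)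
        + complex_of_int (int k - 2*int c) * t(a,b,c) = -1 * t(a,b,c)"
      using fun_cong[OF H, of "(a,b,c)"] by (simp add: cube3_loc[OF loc_rH])
    then have "complex_of_int ((int k - 2*int a) + (int k - 2*int b) + (int k - 2*int c) + 1) * t(a,b,c) = 0"
      by (simp add: algebra_simps)
    then have "(int k - 2*int a) + (int k - 2*int b) + (int k - 2*int c) + 1 = 0"
      using nz by (simp only: mult_eq_0_iff of_int_eq_0_iff) simp
    then have "2*(int a + int b + int c) = 3*int k + 1" by (simp add: algebra_simps)
    then have "int (2*(a+b+c)) = int (3*k+1)" by simp
    then show ?thesis by (simp only: of_nat_eq_iff)
  qed
  show ?thesis
  proof (cases "odd k")
    case True
    then obtain m where km: "k = 2*m+1" by (auto elim: oddE)
    have kd: "Suc k = 2*(m+1)" using km by simp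
    show ?thesis
    proof (rule key[OF kd _ cyc F])
      fix a b c assume nz: "t(a,b,c) \<noteq> 0"
      then have "a \<le> k \<and> b \<le> k \<and> c \<le> k" using tt unfolding tens3_def by blast
      moreover have "2*(a+b+c) = 3*k+1" using lev nz by blast
      ultimately show "a \<le> k \<and> b \<le> k \<and> c \<le> k \<and> Suc (a+b+c) = 3*(m+1)" using km by auto
    qed
  next
    case False
    show ?thesis
    proof (rule ext, clarify)
      fix a b c
      show "t(a,b,c) = 0"
      proof (rule ccontr)
        assume "t(a,b,c) \<noteq> 0"
        then have "2*(a+b+c) = 3*k+1" by (rule lev)
        with False show False by presburger
      qed
    qed
  qed
qed

lemma no_occ:
  assumes W: "\<And>t. t \<in> W \<Longrightarrow> t \<in> tens3 (\<lambda>i. i \<le> k) \<and> (\<forall>a b c. t(a,b,c) = t(b,c,a))"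
  shows "\<not> D_half_occurs_in k W"
proof
  assume "D_half_occurs_in k W"
  then obtain \<phi> where emb: "D_half_embedding W (cube3 (rE k)) (cube3 (rF k)) (cube3 (rH k)) \<phi>"
    unfolding D_half_occurs_in_def by blast
  then have lin: "lin_on (Dsp 1) \<phi>" and inj: "inj_on \<phi> (Dsp 1)" and img: "\<phi> ` Dsp 1 \<subseteq> W"
    and iF: "intertwines (Dsp 1) \<phi> (rF 1) (cube3 (rF k))" and iH: "intertwines (Dsp 1) \<phi> (rH 1) (cube3 (rH k))"
    unfolding D_half_embedding_def by auto
  define e1 :: "nat \<Rightarrow> complex" where "e1 = (\<lambda>i. if i = 1 then 1 else 0)"
  have e1D: "e1 \<in> Dsp 1" unfolding Dsp_def e1_def by simp
  have zD: "(\<lambda>_. 0) \<in> Dsp 1" unfolding Dsp_def by simp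
  have phi0: "\<phi> (\<lambda>_. 0) = (\<lambda>_. 0)"
  proof -
    have "\<phi> (\<lambda>x. 0 * e1 x) = (\<lambda>y. 0 * \<phi> e1 y)" using lin e1D unfolding lin_on_def by blast
    then show ?thesis by simp
  qed
  have "rF 1 e1 = (\<lambda>_. 0)" unfolding rF_def e1_def by (auto simp: fun_eq_iff)
  moreover have "\<phi> (rF 1 e1) = cube3 (rF k) (\<phi> e1)" using iF e1D unfolding intertwines_def by blast
  ultimately have F: "cube3 (rF k) (\<phi> e1) = (\<lambda>_. 0)" using phi0 by simp
  have "rH 1 e1 = (\<lambda>x. -1 * e1 x)" unfolding rH_def e1_def by (auto simp: fun_eq_iff)
  moreover have "\<phi> (rH 1 e1) = cube3 (rH k) (\<phi> e1)" using iH e1D unfolding intertwines_def by blast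
  moreover have "\<phi> (\<lambda>x. -1 * e1 x) = (\<lambda>y. -1 * \<phi> e1 y)" using lin e1D unfolding lin_on_def by blast
  ultimately have H: "cube3 (rH k) (\<phi> e1) = (\<lambda>x. -1 * \<phi> e1 x)" by simp
  have "\<phi> e1 \<in> W" using img e1D by blast
  then have Wt: "\<phi> e1 \<in> tens3 (\<lambda>i. i \<le> k)" "\<And>a b c. \<phi> e1 (a,b,c) = \<phi> e1 (b,c,a)" using W by blast+
  have "\<phi> e1 = (\<lambda>_. 0)" by (rule lowest_zero[OF Wt F H])
  then have "\<phi> e1 = \<phi> (\<lambda>_. 0)" using phi0 by simp
  then have "e1 = (\<lambda>_. 0)" using inj e1D zD unfolding inj_on_def by blast
  then have "e1 1 = 0" by simp
  then show False unfolding e1_def by simp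
qed

lemma Sym_W:
  assumes "t \<in> Sym e (\<lambda>i. i \<le> k)" "e * e = 1"
  shows "t \<in> tens3 (\<lambda>i. i \<le> k) \<and> (\<forall>a b c. t(a,b,c) = t(b,c,a))"
  using assms Sym_cyc[OF assms] unfolding Sym_def by blast

lemma part1_S: "\<not> D_half_occurs_in k (S3 (\<lambda>i. i \<le> k))"
proof (rule no_occ)
  fix t assume "t \<in> S3 (\<lambda>i. i \<le> k)"
  then have "t \<in> Sym 1 (\<lambda>i. i \<le> k)" by (simp add: S3_Sym)
  then show "t \<in> tens3 (\<lambda>i. i \<le> k) \<and> (\<forall>a b c. t(a,b,c) = t(b,c,a))" by (rule Sym_W) simp
qed

lemma part1_L: "\<not> D_half_occurs_in k (L3 (\<lambda>i. i \<le> k))"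
proof (rule no_occ)
  fix t assume "t \<in> L3 (\<lambda>i. i \<le> k)"
  then have "t \<in> Sym (-1) (\<lambda>i. i \<le> k)" by (simp add: L3_Sym)
  then show "t \<in> tens3 (\<lambda>i. i \<le> k) \<and> (\<forall>a b c. t(a,b,c) = t(b,c,a))" by (rule Sym_W) simp
qed

lemma in_M3:
  assumes emb: "D_half_embedding (tens3 (\<lambda>i. i \<le> k)) (cube3 (rE k)) (cube3 (rF k)) (cube3 (rH k)) \<phi>"
  shows "\<phi> ` Dsp 1 \<subseteq> M3 (\<lambda>i. i \<le> k)"
proof -
  from emb have lin: "lin_on (Dsp 1) \<phi>" and img: "\<phi> ` Dsp 1 \<subseteq> tens3 (\<lambda>i. i \<le> k)"
    and iE: "intertwines (Dsp 1) \<phi> (rE 1) (cube3 (rE k))"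
    and iF: "intertwines (Dsp 1) \<phi> (rF 1) (cube3 (rF k))" and iH: "intertwines (Dsp 1) \<phi> (rH 1) (cube3 (rH k))"
    unfolding D_half_embedding_def by auto
  define e1 :: "nat \<Rightarrow> complex" where "e1 = (\<lambda>i. if i = 1 then 1 else 0)"
  define e0 :: "nat \<Rightarrow> complex" where "e0 = (\<lambda>i. if i = 0 then 1 else 0)"
  have e1D: "e1 \<in> Dsp 1" unfolding Dsp_def e1_def by simp
  have e0D: "e0 \<in> Dsp 1" unfolding Dsp_def e0_def by simp
  have phi0: "\<phi> (\<lambda>_. 0) = (\<lambda>_. 0)"
  proof -
    have "\<phi> (\<lambda>x. 0 * e1 x) = (\<lambda>y. 0 * \<phi> e1 y)" using lin e1D unfolding lin_on_def by blast
    then show ?thesis by simp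
  qed
  have "rF 1 e1 = (\<lambda>_. 0)" unfolding rF_def e1_def by (auto simp: fun_eq_iff)
  moreover have "\<phi> (rF 1 e1) = cube3 (rF k) (\<phi> e1)" using iF e1D unfolding intertwines_def by blast
  ultimately have F: "cube3 (rF k) (\<phi> e1) = (\<lambda>_. 0)" using phi0 by simp
  have "rH 1 e1 = (\<lambda>x. -1 * e1 x)" unfolding rH_def e1_def by (auto simp: fun_eq_iff)
  moreover have "\<phi> (rH 1 e1) = cube3 (rH k) (\<phi> e1)" using iH e1D unfolding intertwines_def by blast
  moreover have "\<phi> (\<lambda>x. -1 * e1 x) = (\<lambda>y. -1 * \<phi> e1 y)" using lin e1D unfolding lin_on_def by blast
  ultimately have H: "cube3 (rH k) (\<phi> e1) = (\<lambda>x. -1 * \<phi> e1 x)" by simp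
  have "rE 1 e1 = e0" unfolding rE_def e1_def e0_def by (auto simp: fun_eq_iff)
  moreover have "\<phi> (rE 1 e1) = cube3 (rE k) (\<phi> e1)" using iE e1D unfolding intertwines_def by blast
  ultimately have E: "\<phi> e0 = cube3 (rE k) (\<phi> e1)" by simp
  have t1T: "\<phi> e1 \<in> tens3 (\<lambda>i. i \<le> k)" using img e1D by blast
  have pz1: "proj e (\<phi> e1) = (\<lambda>_. 0)" if ee: "e * e = 1" for e
  proof -
    have "proj e (\<phi> e1) \<in> Sym e (\<lambda>i. i \<le> k)" by (rule proj_Sym[OF t1T ee])
    then have W: "proj e (\<phi> e1) \<in> tens3 (\<lambda>i. i \<le> k)" "\<And>a b c. proj e (\<phi> e1) (a,b,c) = proj e (\<phi> e1) (b,c,a)"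
      using Sym_W[OF _ ee] by blast+
    have "cube3 (rF k) (proj e (\<phi> e1)) = proj e (cube3 (rF k) (\<phi> e1))" by (rule proj_cube3[OF loc_rF])
    also have "\<dots> = (\<lambda>_. 0)" unfolding F by (rule proj_zero)
    finally have F': "cube3 (rF k) (proj e (\<phi> e1)) = (\<lambda>_. 0)" .
    have "cube3 (rH k) (proj e (\<phi> e1)) = proj e (cube3 (rH k) (\<phi> e1))" by (rule proj_cube3[OF loc_rH])
    also have "\<dots> = (\<lambda>x. -1 * proj e (\<phi> e1) x)" unfolding H by (rule proj_smult)
    finally have H': "cube3 (rH k) (proj e (\<phi> e1)) = (\<lambda>x. -1 * proj e (\<phi> e1) x)" .
    show ?thesis by (rule lowest_zero[OF W F' H'])
  qed
  have pz0: "proj e (\<phi> e0) = (\<lambda>_. 0)" if ee: "e * e = 1" for e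
  proof -
    have "proj e (\<phi> e0) = cube3 (rE k) (proj e (\<phi> e1))" unfolding E by (rule proj_cube3[OF loc_rE, symmetric])
    also have "\<dots> = cube3 (rE k) (\<lambda>_. 0)" using pz1[OF ee] by simp
    also have "\<dots> = (\<lambda>_. 0)" by (simp add: cube3_loc[OF loc_rE] fun_eq_iff)
    finally show ?thesis .
  qed
  show ?thesis
  proof
    fix y assume "y \<in> \<phi> ` Dsp 1"
    then obtain v where vD: "v \<in> Dsp 1" and y: "y = \<phi> v" by blast
    have vv: "(\<lambda>x. v 0 * e0 x + v 1 * e1 x) = v"
    proof (rule ext)
      fix x show "v 0 * e0 x + v 1 * e1 x = v x"
        using vD unfolding Dsp_def e0_def e1_def by (cases "x = 0"; cases "x = 1") auto
    qed
    have m0: "(\<lambda>x. v 0 * e0 x) \<in> Dsp 1" and m1: "(\<lambda>x. v 1 * e1 x) \<in> Dsp 1"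
      unfolding Dsp_def e0_def e1_def by auto
    have add: "\<And>v w. v \<in> Dsp 1 \<Longrightarrow> w \<in> Dsp 1 \<Longrightarrow> \<phi> (\<lambda>x. v x + w x) = (\<lambda>y. \<phi> v y + \<phi> w y)"
      using lin unfolding lin_on_def by blast
    have "\<phi> v = (\<lambda>y. \<phi> (\<lambda>x. v 0 * e0 x) y + \<phi> (\<lambda>x. v 1 * e1 x) y)"
      using arg_cong[where f=\<phi>, OF vv] add[OF m0 m1] by simp
    also have "\<dots> = (\<lambda>y. v 0 * \<phi> e0 y + v 1 * \<phi> e1 y)"
      using lin e0D e1D unfolding lin_on_def by simp
    finally have pv: "\<phi> v = (\<lambda>y. v 0 * \<phi> e0 y + v 1 * \<phi> e1 y)" .
    have pj: "proj e (\<phi> v) = (\<lambda>_. 0)" if ee: "e * e = 1" for e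
      unfolding pv proj_add proj_smult pz0[OF ee] pz1[OF ee] by simp
    have "\<phi> v \<in> tens3 (\<lambda>i. i \<le> k)" using img vD by blast
    moreover have "symz (\<phi> v) = (\<lambda>_. 0)" unfolding symz_proj by (rule pj) simp
    moreover have "altz (\<phi> v) = (\<lambda>_. 0)" unfolding altz_proj by (rule pj) simp
    ultimately show "y \<in> M3 (\<lambda>i. i \<le> k)" unfolding y M3_def by blast
  qed
qed

definition Bx :: "nat \<Rightarrow> (nat \<times> nat \<times> nat) set" where "Bx k = {..k} \<times> {..k} \<times> {..k}"
definition Dl :: "nat \<Rightarrow> nat \<times> nat \<times> nat \<Rightarrow> nat \<times> nat \<times> nat \<Rightarrow> complex" where
  "Dl k i = (\<lambda>x. if x = i \<and> i \<in> Bx k then 1 else 0)"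

lemma finite_Bx: "finite (Bx k)" unfolding Bx_def by simp

lemma Dl_tens3: "Dl k i \<in> tens3 (\<lambda>j. j \<le> k)" unfolding tens3_def Dl_def Bx_def by auto

lemma tens3_expand:
  assumes "t \<in> tens3 (\<lambda>j. j \<le> k)"
  shows "t = (\<lambda>x. \<Sum>i\<in>Bx k. t i * Dl k i x)"
proof (rule ext)
  fix x
  have "(\<Sum>i\<in>Bx k. t i * Dl k i x) = (\<Sum>i\<in>Bx k. if i = x then t i else 0)"
    by (rule sum.cong) (auto simp: Dl_def)
  also have "\<dots> = (if x \<in> Bx k then t x else 0)" using finite_Bx by simp
  also have "\<dots> = t x"
  proof (cases "x \<in> Bx k")
    case False
    obtain a b c where x: "x = (a,b,c)" by (cases x) auto
    with False have "\<not> (a \<le> k \<and> b \<le> k \<and> c \<le> k)" unfolding Bx_def by auto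
    then have "t x = 0" using assms unfolding tens3_def x by blast
    then show ?thesis using False by simp
  qed simp
  finally show "t x = (\<Sum>i\<in>Bx k. t i * Dl k i x)" by simp
qed

lemma cube3_rF_Dl:
  assumes "a \<le> k" "b \<le> k" "c \<le> k"
  shows "cube3 (rF k) (Dl k (a,b,c)) = (\<lambda>x. Dl k (Suc a,b,c) x + Dl k (a,Suc b,c) x + Dl k (a,b,Suc c) x)"
proof (rule ext, clarify)
  fix x1 x2 x3
  have t1: "(if x1 = 0 \<or> k < x1 then 0 else 1) * Dl k (a,b,c) (x1 - 1, x2, x3) = Dl k (Suc a,b,c) (x1,x2,x3)"
    using assms unfolding Dl_def Bx_def by auto
  have t2: "(if x2 = 0 \<or> k < x2 then 0 else 1) * Dl k (a,b,c) (x1, x2 - 1, x3) = Dl k (a,Suc b,c) (x1,x2,x3)"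
    using assms unfolding Dl_def Bx_def by auto
  have t3: "(if x3 = 0 \<or> k < x3 then 0 else 1) * Dl k (a,b,c) (x1, x2, x3 - 1) = Dl k (a,b,Suc c) (x1,x2,x3)"
    using assms unfolding Dl_def Bx_def by auto
  show "cube3 (rF k) (Dl k (a,b,c)) (x1,x2,x3) = Dl k (Suc a,b,c) (x1,x2,x3) + Dl k (a,Suc b,c) (x1,x2,x3) + Dl k (a,b,Suc c) (x1,x2,x3)"
    unfolding cube3_loc[OF loc_rF] using t1 t2 t3 by simp
qed

lemma cube3_rH_Dl:
  "cube3 (rH k) (Dl k (a,b,c)) = (\<lambda>x. (complex_of_int (int k - 2*int a) + complex_of_int (int k - 2*int b)
      + complex_of_int (int k - 2*int c)) * Dl k (a,b,c) x)"
proof (rule ext, clarify)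
  fix x1 x2 x3
  show "cube3 (rH k) (Dl k (a,b,c)) (x1,x2,x3) = (complex_of_int (int k - 2*int a) + complex_of_int (int k - 2*int b)
      + complex_of_int (int k - 2*int c)) * Dl k (a,b,c) (x1,x2,x3)"
  proof (cases "(x1,x2,x3) = (a,b,c)")
    case True then show ?thesis unfolding cube3_loc[OF loc_rH] by (simp add: algebra_simps)
  next
    case False then show ?thesis unfolding cube3_loc[OF loc_rH] by (simp add: Dl_def)
  qed
qed

lemma tprod_cube3:
  assumes "loc X g h"
  shows "cube3 (act_fst X) (tprod t u) = tprod (cube3 X t) u"
proof (rule ext, clarify)
  fix i1 j1 i2 j2 i3 j3
  have X: "X v i = g i * v (h i)" for v i using assms unfolding loc_def by blast
  show "cube3 (act_fst X) (tprod t u) ((i1,j1),(i2,j2),(i3,j3)) = tprod (cube3 X t) u ((i1,j1),(i2,j2),(i3,j3))"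
    unfolding cube3_def act_fst_def tprod_def by (simp add: X algebra_simps)
qed

lemma tprod_add: "tprod (\<lambda>x. t x + t' x) u = (\<lambda>y. tprod t u y + tprod t' u y)"
  unfolding tprod_def by (simp add: fun_eq_iff distrib_right split: prod.splits)
lemma tprod_smult: "tprod (\<lambda>x. c * t x) u = (\<lambda>y. c * tprod t u y)"
  unfolding tprod_def by (simp add: fun_eq_iff split: prod.splits)

lemma Sym_inst:
  assumes "t \<in> Sym e P"
  shows "t (q, p, r) = e * t (p, q, r)" "t (p, r, q) = e * t (p, q, r)"
  using assms unfolding Sym_def by blast+

lemma Sym_supp: "t \<in> Sym e P \<Longrightarrow> t (x1,x2,x3) \<noteq> 0 \<Longrightarrow> P x1 \<and> P x2 \<and> P x3"
  unfolding Sym_def tens3_def by blast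

lemma tprod_S:
  assumes t: "t \<in> Sym e (\<lambda>i. i \<le> k)" and u: "u \<in> Sym e (\<lambda>j. j \<le> l)" and e: "e * e = 1"
  shows "tprod t u \<in> S3 (supp2 k l)"
proof -
  have "tprod t u \<in> tens3 (supp2 k l)"
    unfolding tens3_def
  proof (clarify)
    fix i1 j1 i2 j2 i3 j3
    assume "tprod t u ((i1,j1),(i2,j2),(i3,j3)) \<noteq> 0"
    then have "t (i1,i2,i3) \<noteq> 0" "u (j1,j2,j3) \<noteq> 0" unfolding tprod_def by auto
    then show "supp2 k l (i1,j1) \<and> supp2 k l (i2,j2) \<and> supp2 k l (i3,j3)"
      using Sym_supp[OF t] Sym_supp[OF u] unfolding supp2_def by auto
  qed
  moreover have "tprod t u (p2, p1, p3) = tprod t u (p1, p2, p3) \<and> tprod t u (p1, p3, p2) = tprod t u (p1, p2, p3)" for p1 p2 p3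
  proof -
    obtain i1 j1 where p1: "p1 = (i1,j1)" by (cases p1) auto
    obtain i2 j2 where p2: "p2 = (i2,j2)" by (cases p2) auto
    obtain i3 j3 where p3: "p3 = (i3,j3)" by (cases p3) auto
    have a: "t (i2,i1,i3) * u (j2,j1,j3) = (e*e) * (t (i1,i2,i3) * u (j1,j2,j3))"
      unfolding Sym_inst(1)[OF t, where p=i1 and q=i2 and r=i3] Sym_inst(1)[OF u, where p=j1 and q=j2 and r=j3]
      by (simp add: algebra_simps)
    have b: "t (i1,i3,i2) * u (j1,j3,j2) = (e*e) * (t (i1,i2,i3) * u (j1,j2,j3))"
      unfolding Sym_inst(2)[OF t, where p=i1 and q=i2 and r=i3] Sym_inst(2)[OF u, where p=j1 and q=j2 and r=j3]
      by (simp add: algebra_simps)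
    show ?thesis unfolding p1 p2 p3 tprod_def using a b e by simp
  qed
  ultimately show ?thesis unfolding S3_def by blast
qed

lemma Sym_add: "v \<in> Sym e P \<Longrightarrow> w \<in> Sym e P \<Longrightarrow> (\<lambda>x. v x + w x) \<in> Sym e P"
proof -
  assume v: "v \<in> Sym e P" and w: "w \<in> Sym e P"
  have "(\<lambda>x. v x + w x) \<in> tens3 P"
    unfolding tens3_def
  proof (clarify)
    fix x1 x2 x3 assume "v (x1,x2,x3) + w (x1,x2,x3) \<noteq> 0"
    then have "v (x1,x2,x3) \<noteq> 0 \<or> w (x1,x2,x3) \<noteq> 0" by auto
    then show "P x1 \<and> P x2 \<and> P x3" using Sym_supp[OF v] Sym_supp[OF w] by blast
  qed
  moreover have "v (x2, x1, x3) + w (x2, x1, x3) = e * (v (x1, x2, x3) + w (x1, x2, x3)) \<and>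
        v (x1, x3, x2) + w (x1, x3, x2) = e * (v (x1, x2, x3) + w (x1, x2, x3))" for x1 x2 x3
    unfolding Sym_inst[OF v, where p=x1 and q=x2 and r=x3] Sym_inst[OF w, where p=x1 and q=x2 and r=x3]
    by (simp add: algebra_simps)
  ultimately show ?thesis unfolding Sym_def by blast
qed

lemma Sym_smult: "v \<in> Sym e P \<Longrightarrow> (\<lambda>x. c * v x) \<in> Sym e P"
proof -
  assume v: "v \<in> Sym e P"
  have "(\<lambda>x. c * v x) \<in> tens3 P"
    unfolding tens3_def
  proof (clarify)
    fix x1 x2 x3 assume "c * v (x1,x2,x3) \<noteq> 0"
    then have "v (x1,x2,x3) \<noteq> 0" by auto
    then show "P x1 \<and> P x2 \<and> P x3" using Sym_supp[OF v] by blast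
  qed
  moreover have "c * v (x2, x1, x3) = e * (c * v (x1, x2, x3)) \<and>
        c * v (x1, x3, x2) = e * (c * v (x1, x2, x3))" for x1 x2 x3
    unfolding Sym_inst[OF v, where p=x1 and q=x2 and r=x3] by (simp add: algebra_simps)
  ultimately show ?thesis unfolding Sym_def by blast
qed

lemma Sym_zero: "(\<lambda>x. 0) \<in> Sym e P" unfolding Sym_def tens3_def by simp

lemma lin_sum:
  fixes \<phi> :: "('a \<Rightarrow> complex) \<Rightarrow> 'b \<Rightarrow> complex"
  assumes lin: "lin_on S \<phi>" and fin: "finite I"
  and sub: "\<forall>i\<in>I. f i \<in> S"
  and add: "\<And>v w. v \<in> S \<Longrightarrow> w \<in> S \<Longrightarrow> (\<lambda>x. v x + w x) \<in> S"
  and sm: "\<And>c v. v \<in> S \<Longrightarrow> (\<lambda>x. c * v x) \<in> S"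
  and z: "(\<lambda>x. 0) \<in> S"
  shows "(\<lambda>x. \<Sum>i\<in>I. c i * f i x) \<in> S \<and> \<phi> (\<lambda>x. \<Sum>i\<in>I. c i * f i x) = (\<lambda>y. \<Sum>i\<in>I. c i * \<phi> (f i) y)"
  using fin sub
proof (induction I)
  case empty
  have sm': "\<And>c v. v \<in> S \<Longrightarrow> \<phi> (\<lambda>x. c * v x) = (\<lambda>y. c * \<phi> v y)" using lin unfolding lin_on_def by blast
  have "\<phi> (\<lambda>x. 0 * (\<lambda>x. 0) x) = (\<lambda>y. 0 * \<phi> (\<lambda>x. 0) y)" by (rule sm'[OF z])
  then show ?case using z by simp
next
  case (insert i I)
  then have IH: "(\<lambda>x. \<Sum>i\<in>I. c i * f i x) \<in> S"
    "\<phi> (\<lambda>x. \<Sum>i\<in>I. c i * f i x) = (\<lambda>y. \<Sum>i\<in>I. c i * \<phi> (f i) y)" and fi: "f i \<in> S" by auto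
  have m1: "(\<lambda>x. c i * f i x) \<in> S" using sm fi by blast
  have sm': "\<And>c v. v \<in> S \<Longrightarrow> \<phi> (\<lambda>x. c * v x) = (\<lambda>y. c * \<phi> v y)" using lin unfolding lin_on_def by blast
  have add': "\<And>v w. v \<in> S \<Longrightarrow> w \<in> S \<Longrightarrow> \<phi> (\<lambda>x. v x + w x) = (\<lambda>y. \<phi> v y + \<phi> w y)"
    using lin unfolding lin_on_def by blast
  have eq: "(\<lambda>x. \<Sum>j\<in>insert i I. c j * f j x) = (\<lambda>x. (\<lambda>x. c i * f i x) x + (\<lambda>x. \<Sum>j\<in>I. c j * f j x) x)"
    using insert.hyps by simp
  have a: "\<phi> (\<lambda>x. (\<lambda>x. c i * f i x) x + (\<lambda>x. \<Sum>j\<in>I. c j * f j x) x)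
        = (\<lambda>y. \<phi> (\<lambda>x. c i * f i x) y + \<phi> (\<lambda>x. \<Sum>j\<in>I. c j * f j x) y)"
    by (rule add'[OF m1 IH(1)])
  have b: "\<phi> (\<lambda>x. c i * f i x) = (\<lambda>y. c i * \<phi> (f i) y)" by (rule sm'[OF fi])
  show ?case
  proof
    show "(\<lambda>x. \<Sum>j\<in>insert i I. c j * f j x) \<in> S" unfolding eq by (rule add[OF m1 IH(1)])
    show "\<phi> (\<lambda>x. \<Sum>j\<in>insert i I. c j * f j x) = (\<lambda>y. \<Sum>j\<in>insert i I. c j * \<phi> (f j) y)"
      unfolding eq a b IH(2) using insert.hyps by simp
  qed
qed

lemma E_Sym:
  assumes t: "t \<in> Sym e (\<lambda>i. i \<le> k)" and e: "e * e = 1"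
  shows "cube3 (rE k) t \<in> Sym e (\<lambda>i. i \<le> k)"
proof -
  have z: "\<And>p q r. \<not> (p \<le> k \<and> q \<le> k \<and> r \<le> k) \<Longrightarrow> t (p,q,r) = 0" using Sym_supp[OF t] by blast
  have T: "cube3 (rE k) t \<in> tens3 (\<lambda>i. i \<le> k)"
    unfolding tens3_def
  proof (clarify)
    fix a b c assume nz: "cube3 (rE k) t (a,b,c) \<noteq> 0"
    show "a \<le> k \<and> b \<le> k \<and> c \<le> k"
    proof (rule ccontr)
      assume n: "\<not> (a \<le> k \<and> b \<le> k \<and> c \<le> k)"
      have 1: "of_nat (Suc a) * of_nat (k - a) * t (Suc a, b, c) = 0"
        using n z[of "Suc a" b c] by (cases "a \<le> k") auto
      have 2: "of_nat (Suc b) * of_nat (k - b) * t (a, Suc b, c) = 0"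
        using n z[of a "Suc b" c] by (cases "b \<le> k") auto
      have 3: "of_nat (Suc c) * of_nat (k - c) * t (a, b, Suc c) = 0"
        using n z[of a b "Suc c"] by (cases "c \<le> k") auto
      have "cube3 (rE k) t (a,b,c) = of_nat (Suc a) * of_nat (k - a) * t (Suc a, b, c)
          + of_nat (Suc b) * of_nat (k - b) * t (a, Suc b, c) + of_nat (Suc c) * of_nat (k - c) * t (a, b, Suc c)"
        unfolding cube3_loc[OF loc_rE] by (simp only: prod.case)
      also have "\<dots> = 0" unfolding 1 2 3 by simp
      finally have "cube3 (rE k) t (a,b,c) = 0" .
      then show False using nz by simp
    qed
  qed
  have "cube3 (rE k) t = cube3 (rE k) (proj e t)" using Sym_proj[OF t e] by simp
  also have "\<dots> = proj e (cube3 (rE k) t)" by (rule proj_cube3[OF loc_rE])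
  finally show ?thesis using proj_Sym[OF T e] by simp
qed

lemma part2:
  assumes so: "so13_equivariant_S3 k l \<psi>" and e: "e * e = 1"
  and tA: "t \<in> Sym e (\<lambda>i. i \<le> k)" and uB: "u \<in> Sym e (\<lambda>j. j \<le> l)"
  shows "\<psi> (tprod t u) = (\<lambda>_. 0)"
proof -
  define S where "S = S3 (supp2 k l)"
  from so have linpsi: "lin_on S \<psi>" and imgpsi: "\<psi> ` S \<subseteq> Dsp2 1 1"
    and iE: "intertwines S \<psi> (cube3 (act_fst (rE k))) (act_fst (rE 1))"
    and iF: "intertwines S \<psi> (cube3 (act_fst (rF k))) (act_fst (rF 1))"
    and iH: "intertwines S \<psi> (cube3 (act_fst (rH k))) (act_fst (rH 1))"
    unfolding so13_equivariant_S3_def Let_def S_def by auto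
  define A where "A = Sym e (\<lambda>i::nat. i \<le> k)"
  have inS: "tprod t' u \<in> S" if "t' \<in> A" for t'
    using tprod_S[OF _ uB e] that unfolding A_def S_def by blast
  define Phi where "Phi t' = \<psi> (tprod t' u)" for t'
  have Aadd: "\<And>v w. v \<in> A \<Longrightarrow> w \<in> A \<Longrightarrow> (\<lambda>x. v x + w x) \<in> A" unfolding A_def by (rule Sym_add)
  have Asm: "\<And>c v. v \<in> A \<Longrightarrow> (\<lambda>x. c * v x) \<in> A" unfolding A_def by (rule Sym_smult)
  have Az: "(\<lambda>x. 0) \<in> A" unfolding A_def by (rule Sym_zero)
  have padd: "\<And>v w. v \<in> S \<Longrightarrow> w \<in> S \<Longrightarrow> \<psi> (\<lambda>x. v x + w x) = (\<lambda>y. \<psi> v y + \<psi> w y)"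
    using linpsi unfolding lin_on_def by blast
  have psm: "\<And>c v. v \<in> S \<Longrightarrow> \<psi> (\<lambda>x. c * v x) = (\<lambda>y. c * \<psi> v y)"
    using linpsi unfolding lin_on_def by blast
  have Padd: "Phi (\<lambda>x. v x + w x) = (\<lambda>y. Phi v y + Phi w y)" if "v \<in> A" "w \<in> A" for v w
    unfolding Phi_def tprod_add by (rule padd[OF inS inS]) (use that in auto)
  have Psm: "Phi (\<lambda>x. c * v x) = (\<lambda>y. c * Phi v y)" if "v \<in> A" for c v
    unfolding Phi_def tprod_smult by (rule psm[OF inS]) (use that in auto)
  have linPhi: "lin_on A Phi" unfolding lin_on_def using Padd Psm by blast
  have Phi0: "Phi (\<lambda>x. 0) = (\<lambda>_. 0)"
  proof -
    have "Phi (\<lambda>x. 0 * (\<lambda>x. 0) x) = (\<lambda>y. 0 * Phi (\<lambda>x. 0) y)" by (rule Psm[OF Az])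
    then show ?thesis by simp
  qed
  have PF: "Phi (cube3 (rF k) t') = act_fst (rF 1) (Phi t')" if "t' \<in> A" for t'
  proof -
    have "\<psi> (cube3 (act_fst (rF k)) (tprod t' u)) = act_fst (rF 1) (\<psi> (tprod t' u))"
      using iF inS[OF that] unfolding intertwines_def by blast
    then show ?thesis unfolding Phi_def tprod_cube3[OF loc_rF] .
  qed
  have PH: "Phi (cube3 (rH k) t') = act_fst (rH 1) (Phi t')" if "t' \<in> A" for t'
  proof -
    have "\<psi> (cube3 (act_fst (rH k)) (tprod t' u)) = act_fst (rH 1) (\<psi> (tprod t' u))"
      using iH inS[OF that] unfolding intertwines_def by blast
    then show ?thesis unfolding Phi_def tprod_cube3[OF loc_rH] .
  qed
  have PE: "Phi (cube3 (rE k) t') = act_fst (rE 1) (Phi t')" if "t' \<in> A" for t'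
  proof -
    have "\<psi> (cube3 (act_fst (rE k)) (tprod t' u)) = act_fst (rE 1) (\<psi> (tprod t' u))"
      using iE inS[OF that] unfolding intertwines_def by blast
    then show ?thesis unfolding Phi_def tprod_cube3[OF loc_rE] .
  qed
  define s where "s i = proj e (Dl k i)" for i
  have sA: "s i \<in> A" for i unfolding s_def A_def by (rule proj_Sym[OF Dl_tens3 e])
  have main: "Phi t' (0, y0) = 0" if tA': "t' \<in> A" for t' y0
  proof -
    define a where "a i = Phi (s i) (0, y0)" for i
    have aout: "a i = 0" if "i \<notin> Bx k" for i
    proof -
      have "Dl k i = (\<lambda>x. 0)" unfolding Dl_def using that by simp
      then have "s i = (\<lambda>x. 0)" unfolding s_def by (simp add: proj_zero)
      then show ?thesis unfolding a_def using Phi0 by simp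
    qed
    have acyc: "a (q, r, p) = a (p, q, r)" for p q r
    proof -
      have "Dl k (q, r, p) = (\<lambda>(x1,x2,x3). Dl k (p,q,r) (x3,x1,x2))"
        unfolding Dl_def Bx_def by (auto simp: fun_eq_iff)
      then have "s (q, r, p) = s (p, q, r)" unfolding s_def by (simp add: proj_cyc)
      then show ?thesis unfolding a_def by simp
    qed
    have aH: "(int k - 2*int p) + (int k - 2*int q) + (int k - 2*int r) = 1" if "a (p,q,r) \<noteq> 0" for p q r
    proof -
      define C where "C = complex_of_int (int k - 2*int p) + complex_of_int (int k - 2*int q) + complex_of_int (int k - 2*int r)"
      have "cube3 (rH k) (s (p,q,r)) = proj e (cube3 (rH k) (Dl k (p,q,r)))" unfolding s_def by (rule proj_cube3[OF loc_rH])
      also have "\<dots> = (\<lambda>x. C * s (p,q,r) x)" unfolding cube3_rH_Dl proj_smult s_def C_def ..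
      finally have "Phi (cube3 (rH k) (s (p,q,r))) = (\<lambda>y. C * Phi (s (p,q,r)) y)" using Psm[OF sA] by simp
      moreover have "Phi (cube3 (rH k) (s (p,q,r))) (0, y0) = a (p,q,r)"
        unfolding PH[OF sA] a_def act_fst_def rH_def by simp
      ultimately have "C * a (p,q,r) = a (p,q,r)" unfolding a_def by simp
      then have "C = 1" using that by simp
      then have "complex_of_int ((int k - 2*int p) + (int k - 2*int q) + (int k - 2*int r)) = complex_of_int 1"
        unfolding C_def by simp
      then show ?thesis by (simp only: of_int_eq_iff)
    qed
    have aF: "a (Suc p, q, r) + a (p, Suc q, r) + a (p, q, Suc r) = 0" if "p \<le> k" "q \<le> k" "r \<le> k" for p q r
    proof -
      have "cube3 (rF k) (s (p,q,r)) = proj e (cube3 (rF k) (Dl k (p,q,r)))" unfolding s_def by (rule proj_cube3[OF loc_rF])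
      also have "\<dots> = (\<lambda>x. s (Suc p, q, r) x + s (p, Suc q, r) x + s (p, q, Suc r) x)"
        unfolding cube3_rF_Dl[OF that] proj_add s_def ..
      finally have "Phi (cube3 (rF k) (s (p,q,r))) = (\<lambda>y. Phi (s (Suc p, q, r)) y + Phi (s (p, Suc q, r)) y + Phi (s (p, q, Suc r)) y)"
        using Padd[OF Aadd[OF sA sA] sA] Padd[OF sA sA] by simp
      moreover have "Phi (cube3 (rF k) (s (p,q,r))) (0, y0) = 0"
        unfolding PF[OF sA] act_fst_def rF_def by simp
      ultimately show ?thesis unfolding a_def by simp
    qed
    have azero: "a i = 0" if "i \<in> Bx k" for i
    proof (cases "odd k")
      case True
      then obtain m where km: "k = 2*m+1" by (auto elim: oddE)
      have kd: "Suc k = 2*(m+1)" using km by simp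
      define w where "w = (\<lambda>(p,q,r). if p \<le> k \<and> q \<le> k \<and> r \<le> k then a (k - p, k - q, k - r) else 0)"
      have wsupp: "p \<le> k \<and> q \<le> k \<and> r \<le> k \<and> Suc (p+q+r) = 3*(m+1)" if nz: "w (p,q,r) \<noteq> 0" for p q r
      proof -
        have b: "p \<le> k" "q \<le> k" "r \<le> k" and an: "a (k - p, k - q, k - r) \<noteq> 0"
          using nz unfolding w_def by (auto split: if_splits)
        have "(int k - 2*int (k-p)) + (int k - 2*int (k-q)) + (int k - 2*int (k-r)) = 1" by (rule aH[OF an])
        then have "(int k - 2*(int k - int p)) + (int k - 2*(int k - int q)) + (int k - 2*(int k - int r)) = 1"
          using b by (simp add: of_nat_diff)
        then have "2*(int p + int q + int r) = 3 * int k + 1" by (simp add: algebra_simps)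
        then have "2*(p+q+r) = 3*k+1" by (simp only: of_nat_eq_iff[symmetric, where 'a=int]) simp
        then show ?thesis using b km by auto
      qed
      have wcyc: "w (p,q,r) = w (q,r,p)" for p q r
        unfolding w_def using acyc[of "k - q" "k - r" "k - p"] by auto
      have wF: "cube3 (rF k) w = (\<lambda>_. 0)"
      proof (rule ext, clarify)
        fix x1 x2 x3
        have t1: "(if x1 = 0 \<or> k < x1 then 0 else 1) * w (x1 - 1, x2, x3) =
            (if x1 \<le> k \<and> x2 \<le> k \<and> x3 \<le> k then a (Suc (k - x1), k - x2, k - x3) else 0)"
        proof (cases "x1 \<le> k \<and> x2 \<le> k \<and> x3 \<le> k")
          case True
          show ?thesis
          proof (cases "x1 = 0")
            case True
            have "a (Suc (k - x1), k - x2, k - x3) = 0" by (rule aout) (use True in \<open>auto simp: Bx_def\<close>)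
            then show ?thesis using True by simp
          next
            case False
            then have "k - (x1 - 1) = Suc (k - x1)" using \<open>x1 \<le> k \<and> x2 \<le> k \<and> x3 \<le> k\<close> by (simp add: Suc_diff_le)
            then show ?thesis using False True unfolding w_def by simp
          qed
        next
          case False
          then show ?thesis unfolding w_def by auto
        qed
        have t2: "(if x2 = 0 \<or> k < x2 then 0 else 1) * w (x1, x2 - 1, x3) =
            (if x1 \<le> k \<and> x2 \<le> k \<and> x3 \<le> k then a (k - x1, Suc (k - x2), k - x3) else 0)"
        proof (cases "x1 \<le> k \<and> x2 \<le> k \<and> x3 \<le> k")
          case True
          show ?thesis
          proof (cases "x2 = 0")
            case True
            have "a (k - x1, Suc (k - x2), k - x3) = 0" by (rule aout) (use True in \<open>auto simp: Bx_def\<close>)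
            then show ?thesis using True by simp
          next
            case False
            then have "k - (x2 - 1) = Suc (k - x2)" using \<open>x1 \<le> k \<and> x2 \<le> k \<and> x3 \<le> k\<close> by (simp add: Suc_diff_le)
            then show ?thesis using False True unfolding w_def by simp
          qed
        next
          case False
          then show ?thesis unfolding w_def by auto
        qed
        have t3: "(if x3 = 0 \<or> k < x3 then 0 else 1) * w (x1, x2, x3 - 1) =
            (if x1 \<le> k \<and> x2 \<le> k \<and> x3 \<le> k then a (k - x1, k - x2, Suc (k - x3)) else 0)"
        proof (cases "x1 \<le> k \<and> x2 \<le> k \<and> x3 \<le> k")
          case True
          show ?thesis
          proof (cases "x3 = 0")
            case True
            have "a (k - x1, k - x2, Suc (k - x3)) = 0" by (rule aout) (use True in \<open>auto simp: Bx_def\<close>)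
            then show ?thesis using True by simp
          next
            case False
            then have "k - (x3 - 1) = Suc (k - x3)" using \<open>x1 \<le> k \<and> x2 \<le> k \<and> x3 \<le> k\<close> by (simp add: Suc_diff_le)
            then show ?thesis using False True unfolding w_def by simp
          qed
        next
          case False
          then show ?thesis unfolding w_def by auto
        qed
        have "cube3 (rF k) w (x1,x2,x3) =
            (if x1 \<le> k \<and> x2 \<le> k \<and> x3 \<le> k then a (Suc (k - x1), k - x2, k - x3) + a (k - x1, Suc (k - x2), k - x3) + a (k - x1, k - x2, Suc (k - x3)) else 0)"
          unfolding cube3_loc[OF loc_rF] using t1 t2 t3 by simp
        also have "\<dots> = 0" using aF[of "k - x1" "k - x2" "k - x3"] by simp
        finally show "cube3 (rF k) w (x1,x2,x3) = 0" .
      qed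
      have w0: "w = (\<lambda>_. 0)" by (rule key[OF kd wsupp wcyc wF])
      obtain p q r where i: "i = (p,q,r)" by (cases i) auto
      have "p \<le> k" "q \<le> k" "r \<le> k" using that unfolding i Bx_def by auto
      have "w (k - p, k - q, k - r) = 0" using w0 by simp
      then have "a (k - (k - p), k - (k - q), k - (k - r)) = 0" unfolding w_def by simp
      then show ?thesis using \<open>p \<le> k\<close> \<open>q \<le> k\<close> \<open>r \<le> k\<close> i by simp
    next
      case False
      obtain p q r where i: "i = (p,q,r)" by (cases i) auto
      show ?thesis
      proof (rule ccontr)
        assume "a i \<noteq> 0"
        then have "(int k - 2*int p) + (int k - 2*int q) + (int k - 2*int r) = 1" using aH i by blast
        then have "3 * int k = 2 * (int p + int q + int r) + 1" by simp
        then have "odd (3 * int k)" by presburger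
        then show False using False by simp
      qed
    qed
    define beta where "beta v = Phi (proj e v)" for v
    have T: "t' \<in> tens3 (\<lambda>j. j \<le> k)" using tA' unfolding A_def Sym_def by blast
    have linb: "lin_on (tens3 (\<lambda>j::nat. j \<le> k)) beta"
      unfolding lin_on_def
    proof (intro conjI ballI allI)
      fix v w assume "v \<in> tens3 (\<lambda>j. j \<le> k)" "w \<in> tens3 (\<lambda>j. j \<le> k)"
      then have "proj e v \<in> A" "proj e w \<in> A" unfolding A_def using proj_Sym e by blast+
      then show "beta (\<lambda>x. v x + w x) = (\<lambda>y. beta v y + beta w y)"
        unfolding beta_def proj_add by (rule Padd)
    next
      fix c v assume "v \<in> tens3 (\<lambda>j. j \<le> k)"
      then have "proj e v \<in> A" unfolding A_def using proj_Sym e by blast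
      then show "beta (\<lambda>x. c * v x) = (\<lambda>y. c * beta v y)"
        unfolding beta_def proj_smult by (rule Psm)
    qed
    have tadd: "(\<lambda>x. v x + w x) \<in> tens3 (\<lambda>j::nat. j \<le> k)"
      if "v \<in> tens3 (\<lambda>j::nat. j \<le> k)" "w \<in> tens3 (\<lambda>j::nat. j \<le> k)" for v w
      unfolding tens3_def
    proof (clarify)
      fix x1 x2 x3 assume "v (x1,x2,x3) + w (x1,x2,x3) \<noteq> 0"
      then have "v (x1,x2,x3) \<noteq> 0 \<or> w (x1,x2,x3) \<noteq> 0" by auto
      then show "x1 \<le> k \<and> x2 \<le> k \<and> x3 \<le> k" using that unfolding tens3_def by blast
    qed
    have tsm: "(\<lambda>x. c * v x) \<in> tens3 (\<lambda>j::nat. j \<le> k)" if "v \<in> tens3 (\<lambda>j::nat. j \<le> k)" for c v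
      unfolding tens3_def
    proof (clarify)
      fix x1 x2 x3 assume "c * v (x1,x2,x3) \<noteq> 0"
      then have "v (x1,x2,x3) \<noteq> 0" by auto
      then show "x1 \<le> k \<and> x2 \<le> k \<and> x3 \<le> k" using that unfolding tens3_def by blast
    qed
    have tz: "(\<lambda>x. 0) \<in> tens3 (\<lambda>j::nat. j \<le> k)" unfolding tens3_def by simp
    have sub: "\<forall>i\<in>Bx k. Dl k i \<in> tens3 (\<lambda>j. j \<le> k)" using Dl_tens3 by blast
    have "(\<lambda>x. \<Sum>i\<in>Bx k. t' i * Dl k i x) \<in> tens3 (\<lambda>j. j \<le> k) \<and>
        beta (\<lambda>x. \<Sum>i\<in>Bx k. t' i * Dl k i x) = (\<lambda>y. \<Sum>i\<in>Bx k. t' i * beta (Dl k i) y)"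
      by (rule lin_sum[OF linb finite_Bx sub tadd tsm tz])
    then have "beta (\<lambda>x. \<Sum>i\<in>Bx k. t' i * Dl k i x) = (\<lambda>y. \<Sum>i\<in>Bx k. t' i * beta (Dl k i) y)"
      by (rule conjunct2)
    moreover have "beta (\<lambda>x. \<Sum>i\<in>Bx k. t' i * Dl k i x) = Phi t'"
      unfolding tens3_expand[OF T, symmetric] beta_def using Sym_proj[of t' e] tA' e unfolding A_def by simp
    ultimately have "Phi t' (0, y0) = (\<Sum>i\<in>Bx k. t' i * beta (Dl k i) (0, y0))" by simp
    also have "\<dots> = (\<Sum>i\<in>Bx k. t' i * a i)" unfolding beta_def a_def s_def ..
    also have "\<dots> = 0" using azero by simp
    finally show ?thesis .
  qed
  have tA2: "t \<in> A" using tA unfolding A_def .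
  show ?thesis
  proof (rule ext, clarify)
    fix x y
    show "\<psi> (tprod t u) (x, y) = 0"
    proof (cases "x = 0")
      case True then show ?thesis using main[OF tA2, of y] unfolding Phi_def by simp
    next
      case False
      show ?thesis
      proof (cases "x = 1")
        case True
        have "cube3 (rE k) t \<in> A" using E_Sym[OF tA e] unfolding A_def .
        then have "Phi (cube3 (rE k) t) (0, y) = 0" by (rule main)
        moreover have "Phi (cube3 (rE k) t) (0, y) = Phi t (1, y)"
          unfolding PE[OF tA2] act_fst_def rE_def by simp
        ultimately show ?thesis using True unfolding Phi_def by simp
      next
        case False
        have "\<psi> (tprod t u) \<in> Dsp2 1 1" using imgpsi inS[OF tA2] by blast
        then have D: "\<forall>i j. \<psi> (tprod t u) (i,j) \<noteq> 0 \<longrightarrow> i \<le> 1 \<and> j \<le> 1" unfolding Dsp2_def by blast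
        have "\<not> x \<le> 1" using False \<open>x \<noteq> 0\<close> by linarith
        then show ?thesis using D by blast
      qed
    qed
  qed
qed

theorem mainTheorem7:
  shows "(\<forall>k::nat.
            \<not> D_half_occurs_in k (S3 (\<lambda>i. i \<le> k)) \<and>
            \<not> D_half_occurs_in k (L3 (\<lambda>i. i \<le> k)) \<and>
            (\<forall>\<phi>. D_half_embedding (tens3 (\<lambda>i. i \<le> k))
                     (cube3 (rE k)) (cube3 (rF k)) (cube3 (rH k)) \<phi>
                  \<longrightarrow> \<phi> ` Dsp 1 \<subseteq> M3 (\<lambda>i. i \<le> k)))
       \<and> (\<forall>(k::nat) (l::nat) \<psi>. so13_equivariant_S3 k l \<psi> \<longrightarrow>
            (\<forall>t u. (t \<in> S3 (\<lambda>i. i \<le> k) \<and> u \<in> S3 (\<lambda>j. j \<le> l)) \<or>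
                   (t \<in> L3 (\<lambda>i. i \<le> k) \<and> u \<in> L3 (\<lambda>j. j \<le> l))
                   \<longrightarrow> \<psi> (tprod t u) = (\<lambda>_. 0)))"
proof -
  have p1: "\<forall>k::nat.
            \<not> D_half_occurs_in k (S3 (\<lambda>i. i \<le> k)) \<and>
            \<not> D_half_occurs_in k (L3 (\<lambda>i. i \<le> k)) \<and>
            (\<forall>\<phi>. D_half_embedding (tens3 (\<lambda>i. i \<le> k))
                     (cube3 (rE k)) (cube3 (rF k)) (cube3 (rH k)) \<phi>
                  \<longrightarrow> \<phi> ` Dsp 1 \<subseteq> M3 (\<lambda>i. i \<le> k))"
    using part1_S part1_L in_M3 by blast
  have p2: "\<forall>(k::nat) (l::nat) \<psi>. so13_equivariant_S3 k l \<psi> \<longrightarrow>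
            (\<forall>t u. (t \<in> S3 (\<lambda>i. i \<le> k) \<and> u \<in> S3 (\<lambda>j. j \<le> l)) \<or>
                   (t \<in> L3 (\<lambda>i. i \<le> k) \<and> u \<in> L3 (\<lambda>j. j \<le> l))
                   \<longrightarrow> \<psi> (tprod t u) = (\<lambda>_. 0))"
  proof (intro allI impI)
    fix k l :: nat and \<psi> t u
    assume so: "so13_equivariant_S3 k l \<psi>"
    assume h: "(t \<in> S3 (\<lambda>i. i \<le> k) \<and> u \<in> S3 (\<lambda>j. j \<le> l)) \<or>
                   (t \<in> L3 (\<lambda>i. i \<le> k) \<and> u \<in> L3 (\<lambda>j. j \<le> l))"
    then show "\<psi> (tprod t u) = (\<lambda>_. 0)"
    proof
      assume "t \<in> S3 (\<lambda>i. i \<le> k) \<and> u \<in> S3 (\<lambda>j. j \<le> l)"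
      then have "t \<in> Sym 1 (\<lambda>i. i \<le> k)" "u \<in> Sym 1 (\<lambda>j. j \<le> l)" by (simp_all add: S3_Sym)
      then show ?thesis using part2[OF so, of 1] by simp
    next
      assume "t \<in> L3 (\<lambda>i. i \<le> k) \<and> u \<in> L3 (\<lambda>j. j \<le> l)"
      then have "t \<in> Sym (-1) (\<lambda>i. i \<le> k)" "u \<in> Sym (-1) (\<lambda>j. j \<le> l)" by (simp_all add: L3_Sym)
      then show ?thesis using part2[OF so, of "-1"] by simp
    qed
  qed
  show ?thesis using p1 p2 by blast
qed

end
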